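(* Let $M\ge 1$, $1\le N\le M$. For every particle configuration $x=(x_1<\dots<x_N)\subset\{1,\dots,M\}$ and every hole configuration $\overline{x}=(\overline{x_1}<\dots<\overline{x_N})\subset\{1,\dots,M\}$, the following identities hold (as identities of rational functions in $u_1,\dots,u_N$; in particular the right-hand sides are polynomials symmetric in $u_1,\dots,u_N$): \begin{align*} \langle x_1\cdots x_N|B(u_N)\cdots B(u_1)|\Omega\rangle&=G_x(u_1,\dots,u_N),\\ \langle\Omega|C(u_1)\cdots C(u_N)|x_1\cdots x_N\rangle&=\overline{G}_x(u_1,\dots,u_N),\\ \langle 1\cdots M|B(u_1)\cdots B(u_N)|\overline{x_1}\cdots\overline{x_N}\rangle&=H_{\overline{x}}(u_1,\dots,u_N),\\ \langle\overline{x_1}\cdots\overline{x_N}|C(u_N)\cdots C(u_1)|1\cdots M\rangle&=\overline{H}_{\overline{x}}(u_1,\dots,u_N). \end{align*}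
   Context: Fix complex parameters $t,a,b,c,d,e,f$, all nonzero, with $t\neq 1$, satisfying $cd+af=0$ and $tcd+be=0$. Let $W_a\cong V_j\cong\mathbb{C}^2$ with orthonormal basis $|0\rangle,|1\rangle$ and dual basis $\langle 0|,\langle 1|$. For a spectral parameter $u$, the $L$-operator $L_{aj}(u)\in\mathrm{End}(W_a\otimes V_j)$ is defined by its matrix elements $[L(u)]^{\gamma\delta}_{\alpha\beta}:={}_a\langle\gamma|{}_j\langle\delta|L_{aj}(u)|\alpha\rangle_a|\beta\rangle_j$: $[L]^{00}_{00}=au+b$, $[L]^{01}_{01}=atu+b$, $[L]^{01}_{10}=(1-t)cu$, $[L]^{10}_{01}=(1-t)d$, $[L]^{10}_{10}=eu+f$, $[L]^{11}_{11}=eu+tf$, all other matrix elements being $0$. For $M$ sites, the monodromy matrix is $T_a(u)=L_{aM}(u)\cdots L_{a1}(u)\in\mathrm{End}(W_a\otimes V_1\otimes\cdots\otimes V_M)$, and $B(u)={}_a\langle 0|T_a(u)|1\rangle_a$, $C(u)={}_a\langle 1|T_a(u)|0\rangle_a$ (operators on $V_1\otimes\cdots\otimes V_M$). Let $|\Omega\rangle=|0\rangle_1\otimes\cdots\otimes|0\rangle_M$, $|1\cdots M\rangle=|1\rangle_1\otimes\cdots\otimes|1\rangle_M$, and $\langle\Omega|,\langle 1\cdots M|$ their duals. For $1\le x_1<\dots<x_N\le M$, $|x_1\cdots x_N\rangle$ is the basis tensor with $|1\rangle$ at sites $x_1,\dots,x_N$ and $|0\rangle$ elsewhere; for $1\le\overline{x_1}<\dots<\overline{x_N}\le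 M$, $|\overline{x_1}\cdots\overline{x_N}\rangle$ is the basis tensor with $|0\rangle$ at sites $\overline{x_1},\dots,\overline{x_N}$ and $|1\rangle$ elsewhere; bras are the corresponding dual basis vectors. For $\sigma\in S_N$ let $\mathrm{Inv}(\sigma)=\{(j,k):1\le j<k\le N,\ \sigma(j)>\sigma(k)\}$. Define $G_x(u_1,\dots,u_N)=\prod_{j=1}^N\frac{(1-t)cu_j(au_j+b)^M}{eu_j+f}\prod_{1\le j<k\le N}\frac{tu_j-u_k}{u_j-u_k}\sum_{\sigma\in S_N}\prod_{(j,k)\in\mathrm{Inv}(\sigma)}\frac{u_{\sigma(k)}-tu_{\sigma(j)}}{tu_{\sigma(k)}-u_{\sigma(j)}}\prod_{j=1}^N\Big(\frac{eu_{\sigma(j)}+f}{au_{\sigma(j)}+b}\Big)^{x_j}$; $\overline{G}_x(u_1,\dots,u_N)=\prod_{j=1}^N\frac{(1-t)d(eu_j+f)^M}{au_j+b}\prod_{1\le j<k\le N}\frac{u_j-tu_k}{u_j-u_k}\sum_{\sigma\in S_N}\prod_{(j,k)\in\mathrm{Inv}(\sigma)}\frac{tu_{\sigma(k)}-u_{\sigma(j)}}{u_{\sigma(k)}-tu_{\sigma(j)}}\prod_{j=1}^N\Big(\frac{au_{\sigma(j)}+b}{eu_{\sigma(j)}+f}\Big)^{x_j}$; $H_{\overline{x}}(u_1,\dots,u_N)=\prod_{j=1}^N\frac{(1-t)cu_j(atu_j+b)^M}{eu_j+tf}\prod_{1\le j<k\le N}\frac{u_j-tu_k}{t(u_j-u_k)}\sum_{\sigma\in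 S_N}\prod_{(j,k)\in\mathrm{Inv}(\sigma)}\frac{tu_{\sigma(k)}-u_{\sigma(j)}}{u_{\sigma(k)}-tu_{\sigma(j)}}\prod_{j=1}^N\Big(\frac{eu_{\sigma(j)}+tf}{atu_{\sigma(j)}+b}\Big)^{\overline{x_j}}$; $\overline{H}_{\overline{x}}(u_1,\dots,u_N)=\prod_{j=1}^N\frac{(1-t)d(eu_j+tf)^M}{atu_j+b}\prod_{1\le j<k\le N}\frac{tu_j-u_k}{t(u_j-u_k)}\sum_{\sigma\in S_N}\prod_{(j,k)\in\mathrm{Inv}(\sigma)}\frac{u_{\sigma(k)}-tu_{\sigma(j)}}{tu_{\sigma(k)}-u_{\sigma(j)}}\prod_{j=1}^N\Big(\frac{atu_{\sigma(j)}+b}{eu_{\sigma(j)}+tf}\Big)^{\overline{x_j}}$. *)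

theory Defs
  imports Complex_Main "HOL-Combinatorics.Permutations"
begin

text \<open>Convention: the basis vector |0> is encoded by False, |1> by True.
  A basis vector of V_1 (x) ... (x) V_M is encoded by the set S \<subseteq> {1..M}
  of sites carrying |1>.  Operators on V_1 (x) ... (x) V_M are encoded by
  their matrix elements  Op S' S = <S'| Op |S>.\<close>

text \<open>Matrix elements [L(u)]^{gamma delta}_{alpha beta}: arguments u gamma delta alpha beta.\<close>
definition Lent :: "complex \<Rightarrow> complex \<Rightarrow> complex \<Rightarrow> complex \<Rightarrow> complex \<Rightarrow> complex \<Rightarrow> complex
    \<Rightarrow> complex \<Rightarrow> bool \<Rightarrow> bool \<Rightarrow> bool \<Rightarrow> bool \<Rightarrow> complex" where
  "Lent t a b c d e f u \<gamma> \<delta> \<alpha> \<beta> =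
    (if \<gamma> = False \<and> \<delta> = False \<and> \<alpha> = False \<and> \<beta> = False then a*u + b
     else if \<gamma> = False \<and> \<delta> = True \<and> \<alpha> = False \<and> \<beta> = True then a*t*u + b
     else if \<gamma> = False \<and> \<delta> = True \<and> \<alpha> = True \<and> \<beta> = False then (1 - t)*c*u
     else if \<gamma> = True \<and> \<delta> = False \<and> \<alpha> = False \<and> \<beta> = True then (1 - t)*d
     else if \<gamma> = True \<and> \<delta> = False \<and> \<alpha> = True \<and> \<beta> = False then e*u + f
     else if \<gamma> = True \<and> \<delta> = True \<and> \<alpha> = True \<and> \<beta> = True then e*u + t*f
     else 0)"

text \<open>Monodromy matrix T_a(u) = L_{am}(u) ... L_{a1}(u) on m sites:
  mono ... m u gamma alpha S' S = <gamma|_a <S'| T_a(u) |alpha>_a |S>,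
  where only the membership of the sites 1..m in S', S matters.\<close>
fun mono :: "complex \<Rightarrow> complex \<Rightarrow> complex \<Rightarrow> complex \<Rightarrow> complex \<Rightarrow> complex \<Rightarrow> complex
    \<Rightarrow> nat \<Rightarrow> complex \<Rightarrow> bool \<Rightarrow> bool \<Rightarrow> nat set \<Rightarrow> nat set \<Rightarrow> complex" where
  "mono t a b c d e f 0 u \<gamma> \<alpha> S' S = (if \<gamma> = \<alpha> then 1 else 0)"
| "mono t a b c d e f (Suc m) u \<gamma> \<alpha> S' S =
     (\<Sum>\<beta>\<in>{False, True}. Lent t a b c d e f u \<gamma> (Suc m \<in> S') \<beta> (Suc m \<in> S)
                          * mono t a b c d e f m u \<beta> \<alpha> S' S)"

definition Bop where "Bop t a b c d e f M u = mono t a b c d e f M u False True"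
definition Cop where "Cop t a b c d e f M u = mono t a b c d e f M u True False"

definition opmul :: "nat \<Rightarrow> (nat set \<Rightarrow> nat set \<Rightarrow> complex) \<Rightarrow> (nat set \<Rightarrow> nat set \<Rightarrow> complex)
    \<Rightarrow> nat set \<Rightarrow> nat set \<Rightarrow> complex" where
  "opmul M A B S' S = (\<Sum>R\<in>Pow {1..M}. A S' R * B R S)"

fun oplist :: "nat \<Rightarrow> (nat set \<Rightarrow> nat set \<Rightarrow> complex) list \<Rightarrow> nat set \<Rightarrow> nat set \<Rightarrow> complex" where
  "oplist M [] = (\<lambda>S' S. if S' = S then 1 else 0)"
| "oplist M (A # As) = opmul M A (oplist M As)"

definition Inv :: "nat \<Rightarrow> (nat \<Rightarrow> nat) \<Rightarrow> (nat \<times> nat) set" where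
  "Inv N \<sigma> = {(j, k). 1 \<le> j \<and> j < k \<and> k \<le> N \<and> \<sigma> j > \<sigma> k}"

definition Gfun :: "complex \<Rightarrow> complex \<Rightarrow> complex \<Rightarrow> complex \<Rightarrow> complex \<Rightarrow> complex \<Rightarrow> complex
    \<Rightarrow> nat \<Rightarrow> nat \<Rightarrow> (nat \<Rightarrow> nat) \<Rightarrow> (nat \<Rightarrow> complex) \<Rightarrow> complex" where
  "Gfun t a b c d e f M N x u =
    (\<Prod>j=1..N. (1 - t)*c*u j*(a*u j + b)^M / (e*u j + f))
    * (\<Prod>j=1..N. \<Prod>k=j+1..N. (t*u j - u k) / (u j - u k))
    * (\<Sum>\<sigma>\<in>{\<sigma>. \<sigma> permutes {1..N}}.
         (\<Prod>(j, k)\<in>Inv N \<sigma>. (u (\<sigma> k) - t*u (\<sigma> j)) / (t*u (\<sigma> k) - u (\<sigma> j)))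
         * (\<Prod>j=1..N. ((e*u (\<sigma> j) + f) / (a*u (\<sigma> j) + b))^(x j)))"

definition Gbar :: "complex \<Rightarrow> complex \<Rightarrow> complex \<Rightarrow> complex \<Rightarrow> complex \<Rightarrow> complex \<Rightarrow> complex
    \<Rightarrow> nat \<Rightarrow> nat \<Rightarrow> (nat \<Rightarrow> nat) \<Rightarrow> (nat \<Rightarrow> complex) \<Rightarrow> complex" where
  "Gbar t a b c d e f M N x u =
    (\<Prod>j=1..N. (1 - t)*d*(e*u j + f)^M / (a*u j + b))
    * (\<Prod>j=1..N. \<Prod>k=j+1..N. (u j - t*u k) / (u j - u k))
    * (\<Sum>\<sigma>\<in>{\<sigma>. \<sigma> permutes {1..N}}.
         (\<Prod>(j, k)\<in>Inv N \<sigma>. (t*u (\<sigma> k) - u (\<sigma> j)) / (u (\<sigma> k) - t*u (\<sigma> j)))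
         * (\<Prod>j=1..N. ((a*u (\<sigma> j) + b) / (e*u (\<sigma> j) + f))^(x j)))"

definition Hfun :: "complex \<Rightarrow> complex \<Rightarrow> complex \<Rightarrow> complex \<Rightarrow> complex \<Rightarrow> complex \<Rightarrow> complex
    \<Rightarrow> nat \<Rightarrow> nat \<Rightarrow> (nat \<Rightarrow> nat) \<Rightarrow> (nat \<Rightarrow> complex) \<Rightarrow> complex" where
  "Hfun t a b c d e f M N xb u =
    (\<Prod>j=1..N. (1 - t)*c*u j*(a*t*u j + b)^M / (e*u j + t*f))
    * (\<Prod>j=1..N. \<Prod>k=j+1..N. (u j - t*u k) / (t*(u j - u k)))
    * (\<Sum>\<sigma>\<in>{\<sigma>. \<sigma> permutes {1..N}}.
         (\<Prod>(j, k)\<in>Inv N \<sigma>. (t*u (\<sigma> k) - u (\<sigma> j)) / (u (\<sigma> k) - t*u (\<sigma> j)))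
         * (\<Prod>j=1..N. ((e*u (\<sigma> j) + t*f) / (a*t*u (\<sigma> j) + b))^(xb j)))"

definition Hbar :: "complex \<Rightarrow> complex \<Rightarrow> complex \<Rightarrow> complex \<Rightarrow> complex \<Rightarrow> complex \<Rightarrow> complex
    \<Rightarrow> nat \<Rightarrow> nat \<Rightarrow> (nat \<Rightarrow> nat) \<Rightarrow> (nat \<Rightarrow> complex) \<Rightarrow> complex" where
  "Hbar t a b c d e f M N xb u =
    (\<Prod>j=1..N. (1 - t)*d*(e*u j + t*f)^M / (a*t*u j + b))
    * (\<Prod>j=1..N. \<Prod>k=j+1..N. (t*u j - u k) / (t*(u j - u k)))
    * (\<Sum>\<sigma>\<in>{\<sigma>. \<sigma> permutes {1..N}}.
         (\<Prod>(j, k)\<in>Inv N \<sigma>. (u (\<sigma> k) - t*u (\<sigma> j)) / (t*u (\<sigma> k) - u (\<sigma> j)))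
         * (\<Prod>j=1..N. ((a*t*u (\<sigma> j) + b) / (e*u (\<sigma> j) + t*f))^(xb j)))"

end

theory Submission
  imports Defs
begin


type_synonym vec = "nat set \<Rightarrow> complex"

definition skip :: "nat \<Rightarrow> nat \<Rightarrow> nat" where "skip l i = (if i < l then i else Suc i)"

fun Yvf :: "(complex \<Rightarrow> vec \<Rightarrow> vec) \<Rightarrow> vec \<Rightarrow> (nat \<Rightarrow> complex) \<Rightarrow> nat \<Rightarrow> vec" where
  "Yvf Y om u 0 = om"
| "Yvf Y om u (Suc n) = Y (u (Suc n)) (Yvf Y om u n)"

lemma Yvf_cong: "(\<forall>i\<in>{1..n}. u i = v i) \<Longrightarrow> Yvf Y om u n = Yvf Y om v n"
  by (induction n) auto

locale mover =
  fixes Y X :: "complex \<Rightarrow> vec \<Rightarrow> vec" and om :: vec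
    and fc gc :: "complex \<Rightarrow> complex \<Rightarrow> complex" and dd :: "complex \<Rightarrow> complex"
    and ok :: "complex \<Rightarrow> complex \<Rightarrow> bool"
  assumes Y_lin: "finite (K::nat set) \<Longrightarrow> Y w (\<lambda>S. \<Sum>k\<in>K. c k * \<phi> k S) = (\<lambda>S. \<Sum>k\<in>K. c k * Y w (\<phi> k) S)"
    and Y_lin2: "Y w2 (\<lambda>S. c1 * \<phi>1 S + c2 * \<psi>1 S) = (\<lambda>S. c1 * Y w2 \<phi>1 S + c2 * Y w2 \<psi>1 S)"
    and comm: "ok v w \<Longrightarrow> Y v (Y w \<phi>2) = Y w (Y v \<phi>2)"
    and exch: "ok v w \<Longrightarrow> X w (Y v \<phi>2) = (\<lambda>S. fc v w * Y v (X w \<phi>2) S + gc w v * Y w (X v \<phi>2) S)"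
    and eig: "X w om = (\<lambda>S. dd w * om S)"
    and scal: "ok v w \<Longrightarrow> ok w z \<Longrightarrow> ok v z \<Longrightarrow> fc v w * gc w z + gc w v * gc v z = gc w z * fc v z"
    and ok_sym: "ok v w \<Longrightarrow> ok w v"
begin

abbreviation Yv where "Yv \<equiv> Yvf Y om"

lemmas Yv_cong = Yvf_cong[of n u v Y om for n u v]

lemma Y_smult: "Y w (\<lambda>S. c * \<phi> S) = (\<lambda>S. c * Y w \<phi> S)"
  using Y_lin2[of w c \<phi> 0 \<phi>] by simp

lemma moving:
  assumes "\<forall>i\<in>{1..n}. \<forall>j\<in>{1..n}. i \<noteq> j \<longrightarrow> ok (u i) (u j)" "\<forall>i\<in>{1..n}. ok (u i) w"
  shows "X w (Yv u n) = (\<lambda>S. dd w * (\<Prod>i=1..n. fc (u i) w) * Yv u n S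
     + (\<Sum>k=1..n. gc w (u k) * dd (u k) * (\<Prod>i\<in>{1..n}-{k}. fc (u i) (u k)) * Y w (Yv (u \<circ> skip k) (n-1)) S))"
  using assms
proof (induction n arbitrary: w)
  case 0
  then show ?case by (simp add: eig)
next
  case (Suc n)
  define v where "v = u (Suc n)"
  have okv: "ok v w" using Suc.prems v_def by auto
  have okiv: "\<forall>i\<in>{1..n}. ok (u i) v" using Suc.prems v_def by auto
  have IH1: "X w (Yv u n) = (\<lambda>S. dd w * (\<Prod>i=1..n. fc (u i) w) * Yv u n S
     + (\<Sum>k=1..n. gc w (u k) * dd (u k) * (\<Prod>i\<in>{1..n}-{k}. fc (u i) (u k)) * Y w (Yv (u \<circ> skip k) (n-1)) S))"
    by (rule Suc.IH) (use Suc.prems in auto)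
  have IH2: "X v (Yv u n) = (\<lambda>S. dd v * (\<Prod>i=1..n. fc (u i) v) * Yv u n S
     + (\<Sum>k=1..n. gc v (u k) * dd (u k) * (\<Prod>i\<in>{1..n}-{k}. fc (u i) (u k)) * Y v (Yv (u \<circ> skip k) (n-1)) S))"
    by (rule Suc.IH) (use Suc.prems okiv in auto)
  define C where "C k = dd (u k) * (\<Prod>i\<in>{1..n}-{k}. fc (u i) (u k))" for k
  define W where "W k = Yv (u \<circ> skip k) n" for k
  have Wk: "Y (u (Suc n)) (Y w (Yv (u \<circ> skip k) (n - Suc 0))) = Y w (W k)" if "Suc 0 \<le> k" "k \<le> n" for k
  proof -
    have "Y (u (Suc n)) (Y w (Yv (u \<circ> skip k) (n - Suc 0))) = Y w (Y v (Yv (u \<circ> skip k) (n-1)))"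
      using comm okv by (simp add: v_def)
    also have "Y v (Yv (u \<circ> skip k) (n-1)) = W k"
      using that by (cases n) (auto simp: W_def v_def skip_def)
    finally show ?thesis .
  qed
  have Wk2: "Y w (Y (u (Suc n)) (Yv (u \<circ> skip k) (n - Suc 0))) = Y w (W k)" if "Suc 0 \<le> k" "k \<le> n" for k
    using that by (cases n) (auto simp: W_def v_def skip_def)
  have Wn: "Yv (u \<circ> skip (Suc n)) n = Yv u n"
    by (rule Yv_cong) (auto simp: skip_def)
  have "X w (Yv u (Suc n)) = (\<lambda>S. fc v w * Y v (X w (Yv u n)) S + gc w v * Y w (X v (Yv u n)) S)"
    using exch okv by (simp add: v_def)
  also have "\<dots> = (\<lambda>S. fc v w * (dd w * (\<Prod>i=1..n. fc (u i) w) * Yv u (Suc n) S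
       + (\<Sum>k=1..n. gc w (u k) * C k * Y w (W k) S))
     + gc w v * (dd v * (\<Prod>i=1..n. fc (u i) v) * Y w (Yv u n) S
       + (\<Sum>k=1..n. gc v (u k) * C k * Y w (W k) S)))"
  proof -
    have e1: "Y v (X w (Yv u n)) = (\<lambda>S. dd w * (\<Prod>i=1..n. fc (u i) w) * Yv u (Suc n) S
       + (\<Sum>k=1..n. gc w (u k) * C k * Y w (W k) S))"
    proof -
      have "Y v (X w (Yv u n)) = Y v (\<lambda>S. (dd w * (\<Prod>i=1..n. fc (u i) w)) * Yv u n S
     + 1 * (\<Sum>k=1..n. (gc w (u k) * C k) * Y w (Yv (u \<circ> skip k) (n-1)) S))"
        unfolding IH1 C_def by (simp add: mult.assoc)
      also have "\<dots> = (\<lambda>S. (dd w * (\<Prod>i=1..n. fc (u i) w)) * Y v (Yv u n) S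
     + 1 * Y v (\<lambda>S. \<Sum>k=1..n. (gc w (u k) * C k) * Y w (Yv (u \<circ> skip k) (n-1)) S) S)"
        by (rule Y_lin2)
      also have "\<dots> = (\<lambda>S. (dd w * (\<Prod>i=1..n. fc (u i) w)) * Y v (Yv u n) S
     + (\<Sum>k=1..n. (gc w (u k) * C k) * Y v (Y w (Yv (u \<circ> skip k) (n-1))) S))"
        by (subst Y_lin[of "{1..n}" v "\<lambda>k. gc w (u k) * C k" "\<lambda>k. Y w (Yv (u \<circ> skip k) (n-1))"]) simp_all
      also have "\<dots> = (\<lambda>S. dd w * (\<Prod>i=1..n. fc (u i) w) * Yv u (Suc n) S
       + (\<Sum>k=1..n. gc w (u k) * C k * Y w (W k) S))"
        by (auto simp: v_def Wk intro!: ext sum.cong)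
      finally show ?thesis .
    qed
    have e2: "Y w (X v (Yv u n)) = (\<lambda>S. dd v * (\<Prod>i=1..n. fc (u i) v) * Y w (Yv u n) S
       + (\<Sum>k=1..n. gc v (u k) * C k * Y w (W k) S))"
    proof -
      have "Y w (X v (Yv u n)) = Y w (\<lambda>S. (dd v * (\<Prod>i=1..n. fc (u i) v)) * Yv u n S
     + 1 * (\<Sum>k=1..n. (gc v (u k) * C k) * Y v (Yv (u \<circ> skip k) (n-1)) S))"
        unfolding IH2 C_def by (simp add: mult.assoc)
      also have "\<dots> = (\<lambda>S. (dd v * (\<Prod>i=1..n. fc (u i) v)) * Y w (Yv u n) S
     + 1 * Y w (\<lambda>S. \<Sum>k=1..n. (gc v (u k) * C k) * Y v (Yv (u \<circ> skip k) (n-1)) S) S)"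
        by (rule Y_lin2)
      also have "\<dots> = (\<lambda>S. (dd v * (\<Prod>i=1..n. fc (u i) v)) * Y w (Yv u n) S
     + (\<Sum>k=1..n. (gc v (u k) * C k) * Y w (Y v (Yv (u \<circ> skip k) (n-1))) S))"
        by (subst Y_lin[of "{1..n}" w "\<lambda>k. gc v (u k) * C k" "\<lambda>k. Y v (Yv (u \<circ> skip k) (n-1))"]) simp_all
      also have "\<dots> = (\<lambda>S. dd v * (\<Prod>i=1..n. fc (u i) v) * Y w (Yv u n) S
       + (\<Sum>k=1..n. gc v (u k) * C k * Y w (W k) S))"
        by (auto simp: Wk2 v_def intro!: ext sum.cong)
      finally show ?thesis .
    qed
    show ?thesis by (simp add: e1 e2)
  qed
  also have "\<dots> = (\<lambda>S. dd w * (\<Prod>i=1..Suc n. fc (u i) w) * Yv u (Suc n) S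
     + (\<Sum>k=1..Suc n. gc w (u k) * dd (u k) * (\<Prod>i\<in>{1..Suc n}-{k}. fc (u i) (u k)) * Y w (Yv (u \<circ> skip k) (Suc n - 1)) S))"
  proof (rule ext)
    fix S
    have sc: "(fc v w * gc w (u k) + gc w v * gc v (u k)) * C k =
        gc w (u k) * dd (u k) * (\<Prod>i\<in>{1..Suc n}-{k}. fc (u i) (u k))" if k: "k \<in> {1..n}" for k
    proof -
      have o1: "ok v w" by (rule okv)
      have o2: "ok w (u k)" using Suc.prems k by (auto intro: ok_sym)
      have o3: "ok v (u k)" using Suc.prems k v_def by auto
      have pr: "(\<Prod>i\<in>{1..Suc n}-{k}. fc (u i) (u k)) = fc v (u k) * (\<Prod>i\<in>{1..n}-{k}. fc (u i) (u k))"
      proof -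
        have "{1..Suc n}-{k} = insert (Suc n) ({1..n}-{k})" using k by auto
        then show ?thesis by (simp add: v_def)
      qed
      show ?thesis unfolding pr C_def using scal[OF o1 o2 o3] by (simp add: algebra_simps)
    qed
    have "(\<Sum>k=1..Suc n. gc w (u k) * dd (u k) * (\<Prod>i\<in>{1..Suc n}-{k}. fc (u i) (u k)) * Y w (Yv (u \<circ> skip k) (Suc n - 1)) S)
       = (\<Sum>k=1..n. gc w (u k) * dd (u k) * (\<Prod>i\<in>{1..Suc n}-{k}. fc (u i) (u k)) * Y w (W k) S)
         + gc w v * dd v * (\<Prod>i=1..n. fc (u i) v) * Y w (Yv u n) S"
    proof -
      have "{1..Suc n}-{Suc n} = {1..n}" by auto
      then show ?thesis by (simp add: W_def v_def Wn)
    qed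
    also have "(\<Sum>k=1..n. gc w (u k) * dd (u k) * (\<Prod>i\<in>{1..Suc n}-{k}. fc (u i) (u k)) * Y w (W k) S)
        = (\<Sum>k=1..n. (fc v w * gc w (u k) + gc w v * gc v (u k)) * C k * Y w (W k) S)"
      by (rule sum.cong) (auto simp: sc)
    finally have X: "(\<Sum>k=1..Suc n. gc w (u k) * dd (u k) * (\<Prod>i\<in>{1..Suc n}-{k}. fc (u i) (u k)) * Y w (Yv (u \<circ> skip k) (Suc n - 1)) S)
       = (\<Sum>k=1..n. (fc v w * gc w (u k) + gc w v * gc v (u k)) * C k * Y w (W k) S) + gc w v * dd v * (\<Prod>i=1..n. fc (u i) v) * Y w (Yv u n) S" .
    show "fc v w * (dd w * (\<Prod>i=1..n. fc (u i) w) * Yv u (Suc n) S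
       + (\<Sum>k=1..n. gc w (u k) * C k * Y w (W k) S))
     + gc w v * (dd v * (\<Prod>i=1..n. fc (u i) v) * Y w (Yv u n) S
       + (\<Sum>k=1..n. gc v (u k) * C k * Y w (W k) S)) =
     dd w * (\<Prod>i=1..Suc n. fc (u i) w) * Yv u (Suc n) S
     + (\<Sum>k=1..Suc n. gc w (u k) * dd (u k) * (\<Prod>i\<in>{1..Suc n}-{k}. fc (u i) (u k)) * Y w (Yv (u \<circ> skip k) (Suc n - 1)) S)"
      unfolding X by (simp add: v_def algebra_simps sum_distrib_left sum.distrib)
  qed
  finally show ?case .
qed

end


definition ins :: "nat \<Rightarrow> nat \<Rightarrow> (nat \<Rightarrow> nat) \<Rightarrow> nat \<Rightarrow> nat" where
  "ins l n \<tau> j = (if j \<in> {1..n} then skip l (\<tau> j) else if j = Suc n then l else j)"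

definition unskip :: "nat \<Rightarrow> nat \<Rightarrow> nat" where "unskip l i = (if i < l then i else i - 1)"

lemma skip_ne: "skip l i \<noteq> l" by (simp add: skip_def)
lemma skip_inj: "skip l i = skip l j \<longleftrightarrow> i = j" by (auto simp: skip_def)
lemma skip_less: "skip l i < skip l j \<longleftrightarrow> i < j" by (auto simp: skip_def)
lemma skip_unskip: "i \<noteq> l \<Longrightarrow> skip l (unskip l i) = i" by (auto simp: skip_def unskip_def)
lemma unskip_skip: "unskip l (skip l i) = i" by (auto simp: skip_def unskip_def)

lemma ins_permutes:
  assumes "\<tau> permutes {1..n}" "l \<in> {1..Suc n}"
  shows "ins l n \<tau> permutes {1..Suc n}"
proof (rule inj_imp_permutes)
  have tin: "\<tau> j \<in> {1..n}" if "j \<in> {1..n}" for j using permutes_in_image[OF assms(1)] that by blast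
  show "inj_on (ins l n \<tau>) {1..Suc n}"
  proof (rule inj_onI)
    fix i j assume i: "i \<in> {1..Suc n}" and j: "j \<in> {1..Suc n}" and e: "ins l n \<tau> i = ins l n \<tau> j"
    show "i = j"
    proof (cases "i \<in> {1..n}"; cases "j \<in> {1..n}")
      assume "i \<in> {1..n}" "j \<in> {1..n}"
      then show ?thesis using e permutes_inj[OF assms(1)] by (auto simp: ins_def skip_inj inj_def)
    next
      assume "i \<in> {1..n}" "j \<notin> {1..n}"
      then show ?thesis using e j skip_ne by (auto simp: ins_def)
    next
      assume "i \<notin> {1..n}" "j \<in> {1..n}"
      then show ?thesis using e i skip_ne by (auto simp: ins_def) (metis skip_ne)
    next
      assume "i \<notin> {1..n}" "j \<notin> {1..n}"
      then show ?thesis using i j by auto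
    qed
  qed
  show "finite {1..Suc n}" by simp
  show "ins l n \<tau> x \<in> {1..Suc n}" if "x \<in> {1..Suc n}" for x
    using that assms(2) tin[of x] by (auto simp: ins_def skip_def)
  show "ins l n \<tau> x = x" if "x \<notin> {1..Suc n}" for x
    using that by (auto simp: ins_def)
qed

lemma ins_last: "ins l n \<tau> (Suc n) = l" by (simp add: ins_def)

lemma ins_inj:
  assumes "\<tau> permutes {1..n}" "\<tau>' permutes {1..n}" "ins l n \<tau> = ins l n \<tau>'"
  shows "\<tau> = \<tau>'"
proof
  fix j show "\<tau> j = \<tau>' j"
  proof (cases "j \<in> {1..n}")
    case True
    then have "skip l (\<tau> j) = skip l (\<tau>' j)" using assms(3) by (metis ins_def)
    then show ?thesis by (simp add: skip_inj)
  next
    case False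
    then show ?thesis using assms(1,2) by (simp add: permutes_not_in)
  qed
qed

lemma perm_is_ins:
  assumes "\<sigma> permutes {1..Suc n}"
  defines "\<tau> \<equiv> (\<lambda>j. if j \<in> {1..n} then unskip (\<sigma> (Suc n)) (\<sigma> j) else j)"
  shows "\<tau> permutes {1..n}" "\<sigma> = ins (\<sigma> (Suc n)) n \<tau>" "\<sigma> (Suc n) \<in> {1..Suc n}"
proof -
  define l where "l = \<sigma> (Suc n)"
  have sin: "\<sigma> j \<in> {1..Suc n}" if "j \<in> {1..Suc n}" for j using permutes_in_image[OF assms(1)] that by blast
  have sne: "\<sigma> j \<noteq> l" if "j \<in> {1..n}" for j
  proof
    assume "\<sigma> j = l"
    then have "j = Suc n" using permutes_inj[OF assms(1)] by (auto simp: l_def inj_def)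
    then show False using that by simp
  qed
  show "\<sigma> (Suc n) \<in> {1..Suc n}" using sin by auto
  show "\<tau> permutes {1..n}"
  proof (rule inj_imp_permutes)
    show "inj_on \<tau> {1..n}"
    proof (rule inj_onI)
      fix i j assume i: "i \<in> {1..n}" and j: "j \<in> {1..n}" and e: "\<tau> i = \<tau> j"
      then have "skip l (\<tau> i) = skip l (\<tau> j)" by simp
      then have "\<sigma> i = \<sigma> j" using i j sne by (simp add: \<tau>_def l_def skip_unskip)
      then show "i = j" using permutes_inj[OF assms(1)] by (simp add: inj_def)
    qed
    show "finite {1..n}" by simp
    show "\<tau> x \<in> {1..n}" if x: "x \<in> {1..n}" for x
    proof -
      have "\<sigma> x \<in> {1..Suc n}" "\<sigma> x \<noteq> l" "l \<in> {1..Suc n}" using sin x sne[OF x] by (auto simp: l_def)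
      then show ?thesis using x by (auto simp: \<tau>_def unskip_def l_def)
    qed
    show "\<tau> x = x" if "x \<notin> {1..n}" for x using that unfolding \<tau>_def by presburger
  qed
  show "\<sigma> = ins (\<sigma> (Suc n)) n \<tau>"
  proof
    fix j show "\<sigma> j = ins (\<sigma> (Suc n)) n \<tau> j"
    proof (cases "j \<in> {1..n}")
      case True then show ?thesis using sne[OF True] by (simp add: ins_def \<tau>_def skip_unskip l_def)
    next
      case False
      then have "j = Suc n \<or> j \<notin> {1..Suc n}" by auto
      then show ?thesis using False assms(1) by (auto simp: ins_def permutes_not_in)
    qed
  qed
qed

lemma sum_perms_Suc:
  "(\<Sum>\<sigma>\<in>{\<sigma>. \<sigma> permutes {1..Suc n}}. F \<sigma>) = (\<Sum>l=1..Suc n. \<Sum>\<tau>\<in>{\<tau>. \<tau> permutes {1..n}}. F (ins l n \<tau>))"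
proof -
  have eq: "{\<sigma>. \<sigma> permutes {1..Suc n}} = (\<Union>l\<in>{1..Suc n}. ins l n ` {\<tau>. \<tau> permutes {1..n}})"
  proof (rule set_eqI, rule iffI)
    fix \<sigma> assume "\<sigma> \<in> {\<sigma>. \<sigma> permutes {1..Suc n}}"
    then have p: "\<sigma> permutes {1..Suc n}" by simp
    show "\<sigma> \<in> (\<Union>l\<in>{1..Suc n}. ins l n ` {\<tau>. \<tau> permutes {1..n}})"
      using perm_is_ins[OF p] by blast
  next
    fix \<sigma> assume "\<sigma> \<in> (\<Union>l\<in>{1..Suc n}. ins l n ` {\<tau>. \<tau> permutes {1..n}})"
    then show "\<sigma> \<in> {\<sigma>. \<sigma> permutes {1..Suc n}}" using ins_permutes by auto
  qed
  have "(\<Sum>\<sigma>\<in>{\<sigma>. \<sigma> permutes {1..Suc n}}. F \<sigma>) = (\<Sum>l=1..Suc n. \<Sum>\<sigma>\<in>ins l n ` {\<tau>. \<tau> permutes {1..n}}. F \<sigma>)"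
    unfolding eq
  proof (rule sum.UNION_disjoint)
    show "finite {1..Suc n}" by simp
    show "\<forall>i\<in>{1..Suc n}. finite (ins i n ` {\<tau>. \<tau> permutes {1..n}})"
      by (simp add: finite_permutations)
    show "\<forall>i\<in>{1..Suc n}. \<forall>j\<in>{1..Suc n}. i \<noteq> j \<longrightarrow>
        ins i n ` {\<tau>. \<tau> permutes {1..n}} \<inter> ins j n ` {\<tau>. \<tau> permutes {1..n}} = {}"
      using ins_last by (auto) (metis ins_last)
  qed
  also have "\<dots> = (\<Sum>l=1..Suc n. \<Sum>\<tau>\<in>{\<tau>. \<tau> permutes {1..n}}. F (ins l n \<tau>))"
  proof (rule sum.cong[OF refl])
    fix l assume "l \<in> {1..Suc n}"
    have "inj_on (ins l n) {\<tau>. \<tau> permutes {1..n}}"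
      by (rule inj_onI) (use ins_inj in auto)
    then show "(\<Sum>\<sigma>\<in>ins l n ` {\<tau>. \<tau> permutes {1..n}}. F \<sigma>) = (\<Sum>\<tau>\<in>{\<tau>. \<tau> permutes {1..n}}. F (ins l n \<tau>))"
      by (simp add: sum.reindex)
  qed
  finally show ?thesis .
qed



lemma skip_image: "l \<in> {1..Suc n} \<Longrightarrow> skip l ` {1..n} = {1..Suc n} - {l}"
proof (rule set_eqI, rule iffI)
  fix i assume "l \<in> {1..Suc n}" "i \<in> skip l ` {1..n}" then show "i \<in> {1..Suc n} - {l}"
    by (auto simp: skip_def)
next
  fix i assume l: "l \<in> {1..Suc n}" and i: "i \<in> {1..Suc n} - {l}"
  then have "i = skip l (unskip l i)" by (simp add: skip_unskip)
  moreover have "unskip l i \<in> {1..n}" using l i by (auto simp: unskip_def)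
  ultimately show "i \<in> skip l ` {1..n}" by blast
qed

lemma skip_ne2: "l \<noteq> skip l i" by (simp add: skip_def)

lemma inj_skip: "inj (skip l)" by (auto simp: inj_def skip_inj)

lemma prod_skip:
  fixes F :: "nat \<Rightarrow> 'a::comm_monoid_mult"
  assumes "l \<in> {1..Suc n}"
  shows "(\<Prod>j=1..Suc n. F j) = F l * (\<Prod>j=1..n. F (skip l j))"
proof -
  have "{1..Suc n} = insert l (skip l ` {1..n})" using skip_image[OF assms] assms by auto
  moreover have "l \<notin> skip l ` {1..n}" using skip_ne2 by auto
  ultimately have "(\<Prod>j=1..Suc n. F j) = F l * (\<Prod>j\<in>skip l ` {1..n}. F j)" by simp
  also have "(\<Prod>j\<in>skip l ` {1..n}. F j) = (\<Prod>j=1..n. F (skip l j))"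
    by (rule prod.reindex[OF inj_on_subset[OF inj_skip], simplified])
  finally show ?thesis .
qed

definition PS :: "nat \<Rightarrow> (nat \<times> nat) set" where "PS m = {(j,k). 1 \<le> j \<and> j < k \<and> k \<le> m}"

lemma finite_PS: "finite (PS m)"
  by (rule finite_subset[of _ "{1..m} \<times> {1..m}"]) (auto simp: PS_def)

lemma dprod_PS:
  fixes H :: "nat \<Rightarrow> nat \<Rightarrow> 'a::comm_monoid_mult"
  shows "(\<Prod>j=1..m. \<Prod>k=j+1..m. H j k) = (\<Prod>(j,k)\<in>PS m. H j k)"
proof -
  have "(\<Prod>j=1..m. \<Prod>k=j+1..m. H j k) = (\<Prod>(j,k)\<in>Sigma {1..m} (\<lambda>j. {j+1..m}). H j k)"
    by (rule prod.Sigma) auto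
  also have "Sigma {1..m} (\<lambda>j. {j+1..m}) = PS m" by (auto simp: PS_def)
  finally show ?thesis .
qed

lemma PS_decomp:
  assumes l: "l \<in> {1..Suc n}"
  shows "PS (Suc n) = ((\<lambda>(j,k). (skip l j, skip l k)) ` PS n \<union> (\<lambda>j. (j,l)) ` {j\<in>{1..Suc n}. j < l})
           \<union> (\<lambda>k. (l,k)) ` {Suc l..Suc n}"
proof (rule set_eqI, rule iffI)
  fix p assume p: "p \<in> PS (Suc n)"
  obtain j k where jk: "p = (j,k)" by (cases p)
  have j: "1 \<le> j" "j < k" "k \<le> Suc n" using p jk by (auto simp: PS_def)
  show "p \<in> ((\<lambda>(j,k). (skip l j, skip l k)) ` PS n \<union> (\<lambda>j. (j,l)) ` {j\<in>{1..Suc n}. j < l}) \<union> (\<lambda>k. (l,k)) ` {Suc l..Suc n}"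
  proof (cases "j = l \<or> k = l")
    case True then show ?thesis using j jk by auto
  next
    case False
    then have "(j,k) = (skip l (unskip l j), skip l (unskip l k))" by (simp add: skip_unskip)
    moreover have "(unskip l j, unskip l k) \<in> PS n" using False j l by (auto simp: PS_def unskip_def)
    ultimately show ?thesis using jk by force
  qed
next
  fix p assume "p \<in> ((\<lambda>(j,k). (skip l j, skip l k)) ` PS n \<union> (\<lambda>j. (j,l)) ` {j\<in>{1..Suc n}. j < l}) \<union> (\<lambda>k. (l,k)) ` {Suc l..Suc n}"
  then show "p \<in> PS (Suc n)" using l by (auto simp: PS_def skip_def)
qed

lemma dprod_skip:
  fixes H :: "nat \<Rightarrow> nat \<Rightarrow> 'a::comm_monoid_mult"
  assumes l: "l \<in> {1..Suc n}"
  shows "(\<Prod>j=1..Suc n. \<Prod>k=j+1..Suc n. H j k) =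
     (\<Prod>j\<in>{j\<in>{1..Suc n}. j < l}. H j l) * (\<Prod>k\<in>{Suc l..Suc n}. H l k) * (\<Prod>j=1..n. \<Prod>k=j+1..n. H (skip l j) (skip l k))"
proof -
  let ?A = "(\<lambda>(j,k). (skip l j, skip l k)) ` PS n"
  let ?B = "(\<lambda>j. (j,l)) ` {j\<in>{1..Suc n}. j < l}"
  let ?C = "(\<lambda>k. (l,k)) ` {Suc l..Suc n}"
  have d1: "(?A \<union> ?B) \<inter> ?C = {}" by (auto simp: skip_ne skip_ne2)
  have d2: "?A \<inter> ?B = {}" by (auto simp: skip_ne skip_ne2)
  have "(\<Prod>j=1..Suc n. \<Prod>k=j+1..Suc n. H j k) = (\<Prod>(j,k)\<in>PS (Suc n). H j k)" by (rule dprod_PS)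
  also have "\<dots> = (\<Prod>(j,k)\<in>?A \<union> ?B \<union> ?C. H j k)" using PS_decomp[OF l] by simp
  also have "\<dots> = (\<Prod>(j,k)\<in>?A. H j k) * (\<Prod>(j,k)\<in>?B. H j k) * (\<Prod>(j,k)\<in>?C. H j k)"
  proof -
    have "(\<Prod>p\<in>?A \<union> ?B \<union> ?C. case_prod H p) = (\<Prod>p\<in>?A \<union> ?B. case_prod H p) * (\<Prod>p\<in>?C. case_prod H p)"
      by (rule prod.union_disjoint) (use d1 finite_PS in auto)
    moreover have "(\<Prod>p\<in>?A \<union> ?B. case_prod H p) = (\<Prod>p\<in>?A. case_prod H p) * (\<Prod>p\<in>?B. case_prod H p)"
      by (rule prod.union_disjoint) (use d2 finite_PS in auto)
    ultimately show ?thesis by simp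
  qed
  also have "(\<Prod>(j,k)\<in>?A. H j k) = (\<Prod>(j,k)\<in>PS n. H (skip l j) (skip l k))"
  proof -
    have "inj_on (\<lambda>(j,k). (skip l j, skip l k)) (PS n)" by (auto simp: inj_on_def skip_inj)
    then show ?thesis by (subst prod.reindex) (auto simp: case_prod_beta comp_def)
  qed
  also have "\<dots> = (\<Prod>j=1..n. \<Prod>k=j+1..n. H (skip l j) (skip l k))" by (rule dprod_PS[symmetric])
  also have "(\<Prod>(j,k)\<in>?B. H j k) = (\<Prod>j\<in>{j\<in>{1..Suc n}. j < l}. H j l)"
    by (subst prod.reindex) (auto simp: inj_on_def)
  also have "(\<Prod>(j,k)\<in>?C. H j k) = (\<Prod>k\<in>{Suc l..Suc n}. H l k)"
    by (subst prod.reindex) (auto simp: inj_on_def)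
  finally show ?thesis by (simp add: ac_simps)
qed

lemma Inv_ins:
  assumes "\<tau> permutes {1..n}" "l \<in> {1..Suc n}"
  shows "Inv (Suc n) (ins l n \<tau>) = Inv n \<tau> \<union> (\<lambda>j. (j, Suc n)) ` {j\<in>{1..n}. l \<le> \<tau> j}"
proof (rule set_eqI, rule iffI)
  fix p assume p: "p \<in> Inv (Suc n) (ins l n \<tau>)"
  obtain j k where jk: "p = (j,k)" by (cases p)
  show "p \<in> Inv n \<tau> \<union> (\<lambda>j. (j, Suc n)) ` {j\<in>{1..n}. l \<le> \<tau> j}"
  proof (cases "k = Suc n")
    case True
    then have "j \<in> {1..n}" "skip l (\<tau> j) > l" using p jk by (auto simp: Inv_def ins_def)
    then show ?thesis using jk True by (auto simp: skip_def split: if_splits)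
  next
    case False
    then have "j \<in> {1..n}" "k \<in> {1..n}" "j < k" "skip l (\<tau> j) > skip l (\<tau> k)" using p jk by (auto simp: Inv_def ins_def)
    then show ?thesis using jk by (auto simp: Inv_def skip_less)
  qed
next
  fix p assume p: "p \<in> Inv n \<tau> \<union> (\<lambda>j. (j, Suc n)) ` {j\<in>{1..n}. l \<le> \<tau> j}"
  then show "p \<in> Inv (Suc n) (ins l n \<tau>)"
    by (auto simp: Inv_def ins_def skip_less) (auto simp: skip_def)
qed

lemma finite_Inv: "finite (Inv n \<sigma>)"
  by (rule finite_subset[of _ "{1..n} \<times> {1..n}"]) (auto simp: Inv_def)

lemma Inv_prod_ins:
  fixes F :: "nat \<Rightarrow> nat \<Rightarrow> 'a::comm_monoid_mult"
  assumes t: "\<tau> permutes {1..n}" and l: "l \<in> {1..Suc n}"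
  shows "(\<Prod>(j,k)\<in>Inv (Suc n) (ins l n \<tau>). F (ins l n \<tau> k) (ins l n \<tau> j))
     = (\<Prod>(j,k)\<in>Inv n \<tau>. F (skip l (\<tau> k)) (skip l (\<tau> j))) * (\<Prod>i\<in>{Suc l..Suc n}. F l i)"
proof -
  let ?J = "{j\<in>{1..n}. l \<le> \<tau> j}"
  have disj: "Inv n \<tau> \<inter> (\<lambda>j. (j, Suc n)) ` ?J = {}" by (auto simp: Inv_def)
  have "(\<Prod>(j,k)\<in>Inv (Suc n) (ins l n \<tau>). F (ins l n \<tau> k) (ins l n \<tau> j))
      = (\<Prod>(j,k)\<in>Inv n \<tau>. F (ins l n \<tau> k) (ins l n \<tau> j)) * (\<Prod>(j,k)\<in>(\<lambda>j. (j, Suc n)) ` ?J. F (ins l n \<tau> k) (ins l n \<tau> j))"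
    unfolding Inv_ins[OF t l] by (rule prod.union_disjoint[OF finite_Inv _ disj]) simp
  also have "(\<Prod>(j,k)\<in>Inv n \<tau>. F (ins l n \<tau> k) (ins l n \<tau> j)) = (\<Prod>(j,k)\<in>Inv n \<tau>. F (skip l (\<tau> k)) (skip l (\<tau> j)))"
    by (rule prod.cong) (auto simp: Inv_def ins_def)
  also have "(\<Prod>(j,k)\<in>(\<lambda>j. (j, Suc n)) ` ?J. F (ins l n \<tau> k) (ins l n \<tau> j)) = (\<Prod>j\<in>?J. F l (skip l (\<tau> j)))"
    by (subst prod.reindex) (auto simp: inj_on_def ins_def)
  also have "\<dots> = (\<Prod>i\<in>{Suc l..Suc n}. F l i)"
  proof (rule prod.reindex_bij_betw)
    show "bij_betw (\<lambda>j. skip l (\<tau> j)) ?J {Suc l..Suc n}"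
    proof (rule bij_betw_imageI)
      show "inj_on (\<lambda>j. skip l (\<tau> j)) ?J"
        using permutes_inj[OF t] by (auto simp: inj_on_def skip_inj inj_def)
      show "(\<lambda>j. skip l (\<tau> j)) ` ?J = {Suc l..Suc n}"
      proof (rule set_eqI, rule iffI)
        fix i assume "i \<in> (\<lambda>j. skip l (\<tau> j)) ` ?J"
        then obtain j where "j \<in> {1..n}" "l \<le> \<tau> j" "i = skip l (\<tau> j)" by auto
        moreover have "\<tau> j \<in> {1..n}" using permutes_in_image[OF t] \<open>j \<in> {1..n}\<close> by blast
        ultimately show "i \<in> {Suc l..Suc n}" by (auto simp: skip_def)
      next
        fix i assume i: "i \<in> {Suc l..Suc n}"
        then have "i - 1 \<in> {1..n}" using l by auto
        then obtain j where j: "j \<in> {1..n}" "\<tau> j = i - 1"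
          using permutes_image[OF t] by (metis imageE)
        then have "skip l (\<tau> j) = i" "l \<le> \<tau> j" using i by (auto simp: skip_def)
        then show "i \<in> (\<lambda>j. skip l (\<tau> j)) ` ?J" using j by force
      qed
    qed
  qed
  finally show ?thesis .
qed

definition BF :: "(complex\<Rightarrow>complex) \<Rightarrow> (complex\<Rightarrow>complex) \<Rightarrow> (complex\<Rightarrow>complex\<Rightarrow>complex) \<Rightarrow> (complex\<Rightarrow>complex\<Rightarrow>complex)
   \<Rightarrow> (complex\<Rightarrow>complex) \<Rightarrow> nat \<Rightarrow> nat \<Rightarrow> (nat\<Rightarrow>nat) \<Rightarrow> (nat\<Rightarrow>complex) \<Rightarrow> complex" where
"BF \<pi> \<rho> h s z M N x u = (\<Prod>j=1..N. \<pi> (u j) * \<rho> (u j)^M) * (\<Prod>j=1..N. \<Prod>k=j+1..N. h (u j) (u k))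
   * (\<Sum>\<sigma>\<in>{\<sigma>. \<sigma> permutes {1..N}}. (\<Prod>(j,k)\<in>Inv N \<sigma>. s (u (\<sigma> k)) (u (\<sigma> j))) * (\<Prod>j=1..N. z (u (\<sigma> j))^(x j)))"

lemma Inv_0: "Inv 0 \<sigma> = {}" by (auto simp: Inv_def)

lemma BF_0: "BF \<pi> \<rho> h s z M 0 x u = 1"
  by (simp add: BF_def Inv_0)

lemma BF_Suc_M: "BF \<pi> \<rho> h s z (Suc M) N x u = (\<Prod>j=1..N. \<rho> (u j)) * BF \<pi> \<rho> h s z M N x u"
  by (simp add: BF_def prod.distrib[symmetric] ac_simps)

lemma BF_laplace:
  "BF \<pi> \<rho> h s z M (Suc n) x u = (\<Sum>l=1..Suc n. \<pi> (u l) * \<rho> (u l)^M * z (u l)^(x (Suc n))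
     * (\<Prod>j\<in>{j\<in>{1..Suc n}. j < l}. h (u j) (u l)) * (\<Prod>k\<in>{Suc l..Suc n}. h (u l) (u k) * s (u l) (u k))
     * BF \<pi> \<rho> h s z M n x (u \<circ> skip l))"
proof -
  define P1 where "P1 = (\<Prod>j=1..Suc n. \<pi> (u j) * \<rho> (u j)^M)"
  define P2 where "P2 = (\<Prod>j=1..Suc n. \<Prod>k=j+1..Suc n. h (u j) (u k))"
  define T where "T \<sigma> = (\<Prod>(j,k)\<in>Inv (Suc n) \<sigma>. s (u (\<sigma> k)) (u (\<sigma> j))) * (\<Prod>j=1..Suc n. z (u (\<sigma> j))^(x j))" for \<sigma>
  define v where "v l = u \<circ> skip l" for l
  define BS where "BS l = (\<Sum>\<tau>\<in>{\<tau>. \<tau> permutes {1..n}}. (\<Prod>(j,k)\<in>Inv n \<tau>. s (v l (\<tau> k)) (v l (\<tau> j))) * (\<Prod>j=1..n. z (v l (\<tau> j))^(x j)))" for l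
  have T: "(\<Sum>\<tau>\<in>{\<tau>. \<tau> permutes {1..n}}. T (ins l n \<tau>)) = z (u l)^(x (Suc n)) * (\<Prod>i\<in>{Suc l..Suc n}. s (u l) (u i)) * BS l"
    if l: "l \<in> {1..Suc n}" for l
  proof -
    have "T (ins l n \<tau>) = z (u l)^(x (Suc n)) * (\<Prod>i\<in>{Suc l..Suc n}. s (u l) (u i)) *
       ((\<Prod>(j,k)\<in>Inv n \<tau>. s (v l (\<tau> k)) (v l (\<tau> j))) * (\<Prod>j=1..n. z (v l (\<tau> j))^(x j)))"
      if t: "\<tau> permutes {1..n}" for \<tau>
    proof -
      have i: "(\<Prod>(j,k)\<in>Inv (Suc n) (ins l n \<tau>). s (u (ins l n \<tau> k)) (u (ins l n \<tau> j)))
        = (\<Prod>(j,k)\<in>Inv n \<tau>. s (v l (\<tau> k)) (v l (\<tau> j))) * (\<Prod>i\<in>{Suc l..Suc n}. s (u l) (u i))"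
        using Inv_prod_ins[OF t l, of "\<lambda>p q. s (u p) (u q)"] by (simp add: v_def)
      have zz: "(\<Prod>j=1..Suc n. z (u (ins l n \<tau> j))^(x j)) = (\<Prod>j=1..n. z (v l (\<tau> j))^(x j)) * z (u l)^(x (Suc n))"
      proof -
        have "(\<Prod>j=1..Suc n. z (u (ins l n \<tau> j))^(x j)) = (\<Prod>j=1..n. z (u (ins l n \<tau> j))^(x j)) * z (u l)^(x (Suc n))"
          by (simp add: prod.cl_ivl_Suc ins_last)
        also have "(\<Prod>j=1..n. z (u (ins l n \<tau> j))^(x j)) = (\<Prod>j=1..n. z (v l (\<tau> j))^(x j))"
          by (rule prod.cong) (auto simp: ins_def v_def)
        finally show ?thesis .
      qed
      show ?thesis unfolding T_def i zz by (simp add: ac_simps)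
    qed
    then show ?thesis unfolding BS_def by (simp add: sum_distrib_left)
  qed
  have "BF \<pi> \<rho> h s z M (Suc n) x u = P1 * P2 * (\<Sum>l=1..Suc n. \<Sum>\<tau>\<in>{\<tau>. \<tau> permutes {1..n}}. T (ins l n \<tau>))"
    unfolding BF_def P1_def P2_def T_def by (subst sum_perms_Suc) simp
  also have "\<dots> = (\<Sum>l=1..Suc n. P1 * P2 * (z (u l)^(x (Suc n)) * (\<Prod>i\<in>{Suc l..Suc n}. s (u l) (u i)) * BS l))"
  proof (subst sum_distrib_left, rule sum.cong[OF refl])
    fix l assume l: "l \<in> {1..Suc n}"
    show "P1 * P2 * (\<Sum>\<tau>\<in>{\<tau>. \<tau> permutes {1..n}}. T (ins l n \<tau>)) = P1 * P2 * (z (u l)^(x (Suc n)) * (\<Prod>i\<in>{Suc l..Suc n}. s (u l) (u i)) * BS l)"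
      by (simp only: T[OF l])
  qed
  also have "\<dots> = (\<Sum>l=1..Suc n. \<pi> (u l) * \<rho> (u l)^M * z (u l)^(x (Suc n))
     * (\<Prod>j\<in>{j\<in>{1..Suc n}. j < l}. h (u j) (u l)) * (\<Prod>k\<in>{Suc l..Suc n}. h (u l) (u k) * s (u l) (u k))
     * BF \<pi> \<rho> h s z M n x (u \<circ> skip l))"
  proof (rule sum.cong[OF refl])
    fix l assume l: "l \<in> {1..Suc n}"
    have p1: "P1 = \<pi> (u l) * \<rho> (u l)^M * (\<Prod>j=1..n. \<pi> (v l j) * \<rho> (v l j)^M)"
      unfolding P1_def using prod_skip[OF l, of "\<lambda>j. \<pi> (u j) * \<rho> (u j)^M"] by (simp add: v_def)
    have p2: "P2 = (\<Prod>j\<in>{j\<in>{1..Suc n}. j < l}. h (u j) (u l)) * (\<Prod>k\<in>{Suc l..Suc n}. h (u l) (u k))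
        * (\<Prod>j=1..n. \<Prod>k=j+1..n. h (v l j) (v l k))"
      unfolding P2_def using dprod_skip[OF l, of "\<lambda>j k. h (u j) (u k)"] by (simp add: v_def)
    have bf: "BF \<pi> \<rho> h s z M n x (u \<circ> skip l) = (\<Prod>j=1..n. \<pi> (v l j) * \<rho> (v l j)^M) * (\<Prod>j=1..n. \<Prod>k=j+1..n. h (v l j) (v l k)) * BS l"
      unfolding BF_def BS_def v_def by simp
    show "P1 * P2 * (z (u l)^(x (Suc n)) * (\<Prod>i\<in>{Suc l..Suc n}. s (u l) (u i)) * BS l) =
      \<pi> (u l) * \<rho> (u l)^M * z (u l)^(x (Suc n))
     * (\<Prod>j\<in>{j\<in>{1..Suc n}. j < l}. h (u j) (u l)) * (\<Prod>k\<in>{Suc l..Suc n}. h (u l) (u k) * s (u l) (u k))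
     * BF \<pi> \<rho> h s z M n x (u \<circ> skip l)"
      unfolding p1 p2 bf prod.distrib by (simp add: ac_simps)
  qed
  finally show ?thesis .
qed



definition loc :: "nat \<Rightarrow> vec \<Rightarrow> bool" where
  "loc m \<phi> \<longleftrightarrow> (\<forall>S S'. S \<inter> {1..m} = S' \<inter> {1..m} \<longrightarrow> \<phi> S = \<phi> S')"
lemma locD: "loc m \<phi> \<Longrightarrow> S \<inter> {1..m} = S' \<inter> {1..m} \<Longrightarrow> \<phi> S = \<phi> S'"
  unfolding loc_def by (erule allE, erule allE, erule impE, assumption, assumption)
lemma locI: "(\<And>S S'. S \<inter> {1..m} = S' \<inter> {1..m} \<Longrightarrow> \<phi> S = \<phi> S') \<Longrightarrow> loc m \<phi>"
  unfolding loc_def by (intro allI impI)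
lemma loc_smult: assumes "loc m \<phi>" shows "loc m (\<lambda>S. c * \<phi> S)"
proof (rule locI)
  fix S S' assume "S \<inter> {1..m} = S' \<inter> {1..m}"
  then have "\<phi> S = \<phi> S'" by (rule locD[OF assms])
  then show "c * \<phi> S = c * \<phi> S'" by simp
qed
lemma loc_sum: assumes "(\<And>k. k \<in> K \<Longrightarrow> loc m (\<phi> k))" shows "loc m (\<lambda>S. \<Sum>k\<in>K. c k * \<phi> k S)"
proof (rule locI)
  fix S S' assume e: "S \<inter> {1..m} = S' \<inter> {1..m}"
  have "\<phi> k S = \<phi> k S'" if "k \<in> K" for k by (rule locD[OF assms[OF that] e])
  then show "(\<Sum>k\<in>K. c k * \<phi> k S) = (\<Sum>k\<in>K. c k * \<phi> k S')"
    by (intro sum.cong) auto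
qed

lemma tri_swap:
  fixes g :: "nat \<Rightarrow> nat \<Rightarrow> complex"
  shows "(\<Sum>k=1..N. \<Sum>l\<in>{1..<k}. g k l) = (\<Sum>l=1..N. \<Sum>k\<in>{Suc l..N}. g k l)"
proof (induction N)
  case 0 then show ?case by simp
next
  case (Suc N)
  have "(\<Sum>k=1..Suc N. \<Sum>l\<in>{1..<k}. g k l) = (\<Sum>k=1..N. \<Sum>l\<in>{1..<k}. g k l) + (\<Sum>l\<in>{1..<Suc N}. g (Suc N) l)"
    by simp
  also have "\<dots> = (\<Sum>l=1..N. \<Sum>k\<in>{Suc l..N}. g k l) + (\<Sum>l=1..N. g (Suc N) l)"
    using Suc by (simp add: atLeastLessThanSuc_atLeastAtMost)
  also have "\<dots> = (\<Sum>l=1..N. \<Sum>k\<in>{Suc l..Suc N}. g k l)"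
    by (simp add: sum.distrib[symmetric])
  also have "\<dots> = (\<Sum>l=1..Suc N. \<Sum>k\<in>{Suc l..Suc N}. g k l)"
    by simp
  finally show ?case .
qed

locale wfgen =
  fixes Yo Xo :: "nat \<Rightarrow> complex \<Rightarrow> vec \<Rightarrow> vec" and om :: "nat \<Rightarrow> vec"
    and fc gc :: "complex \<Rightarrow> complex \<Rightarrow> complex" and dd :: "nat \<Rightarrow> complex \<Rightarrow> complex"
    and ok :: "complex \<Rightarrow> complex \<Rightarrow> bool" and nz :: "complex \<Rightarrow> bool"
    and p0 p1 q :: "complex \<Rightarrow> complex"
    and flp :: "nat \<Rightarrow> nat set \<Rightarrow> bool"
    and pr0 pr1 :: "nat \<Rightarrow> vec \<Rightarrow> vec"
    and tgt :: "nat \<Rightarrow> nat \<Rightarrow> (nat \<Rightarrow> nat) \<Rightarrow> nat set"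
    and \<pi>f \<rho> z :: "complex \<Rightarrow> complex" and h s :: "complex \<Rightarrow> complex \<Rightarrow> complex"
  assumes mv: "mover (Yo m) (Xo m) (om m) fc gc (dd m) ok"
    and locY: "loc m (Yo m w \<phi>)" and locX: "loc m (Xo m w \<phi>)" and locom: "loc m (om m)"
    and X_smult: "Xo m w (\<lambda>S. c * \<phi> S) = (\<lambda>S. c * Xo m w \<phi> S)"
    and Ysplit: "Yo (Suc m) w \<phi> = (\<lambda>S. if flp m S then p1 w * Yo m w (pr1 m \<phi>) S + q w * Xo m w (pr0 m \<phi>) S
                                      else p0 w * Yo m w (pr0 m \<phi>) S)"
    and om_split: "om (Suc m) = (\<lambda>S. if flp m S then 0 else om m S)"
    and pr0_split: "loc m G0 \<Longrightarrow> loc m G1 \<Longrightarrow> pr0 m (\<lambda>S. if flp m S then G1 S else G0 S) = G0"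
    and pr1_split: "loc m G0 \<Longrightarrow> loc m G1 \<Longrightarrow> pr1 m (\<lambda>S. if flp m S then G1 S else G0 S) = G1"
    and tgt0: "om m (tgt m 0 x) = 1"
    and tgt_flp: "strict_mono_on {1..Suc n} x \<Longrightarrow> x ` {1..Suc n} \<subseteq> {1..Suc m} \<Longrightarrow>
                    flp m (tgt (Suc m) (Suc n) x) = (x (Suc n) = Suc m)"
    and tgt_r1: "x ` {1..N} \<subseteq> {1..m} \<Longrightarrow> tgt (Suc m) N x \<inter> {1..m} = tgt m N x \<inter> {1..m}"
    and tgt_r2: "strict_mono_on {1..Suc n} x \<Longrightarrow> x ` {1..Suc n} \<subseteq> {1..Suc m} \<Longrightarrow> x (Suc n) = Suc m \<Longrightarrow>
                    tgt (Suc m) (Suc n) x \<inter> {1..m} = tgt m n x \<inter> {1..m}"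
    and M1: "nz w \<Longrightarrow> \<pi>f w * \<rho> w ^ Suc m * z w ^ Suc m = q w * dd m w"
    and M2: "p0 w = \<rho> w"
    and M3a: "ok v w \<Longrightarrow> fc v w = h v w"
    and M3b: "ok v w \<Longrightarrow> fc v w = h w v * s w v"
    and M4: "ok v w \<Longrightarrow> nz v \<Longrightarrow> nz w \<Longrightarrow> p1 v * q w + p0 w * q v * gc v w = q w * p0 v * fc v w"
begin

abbreviation Ych where "Ych m \<equiv> Yvf (Yo m) (om m)"

lemma Y_lin: "finite (K::nat set) \<Longrightarrow> Yo m w (\<lambda>S. \<Sum>k\<in>K. c k * \<phi> k S) = (\<lambda>S. \<Sum>k\<in>K. c k * Yo m w (\<phi> k) S)"
  using mover.Y_lin[OF mv] by blast
lemma Y_lin2: "Yo m w (\<lambda>S. c1 * \<phi>1 S + c2 * \<psi>1 S) = (\<lambda>S. c1 * Yo m w \<phi>1 S + c2 * Yo m w \<psi>1 S)"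
  using mover.Y_lin2[OF mv] by blast
lemma Y_smult: "Yo m w (\<lambda>S. c * \<phi> S) = (\<lambda>S. c * Yo m w \<phi> S)"
  using mover.Y_smult[OF mv] by blast
lemma ok_sym: "ok v w \<Longrightarrow> ok w v" using mover.ok_sym[OF mv] by blast

fun Bapp :: "nat \<Rightarrow> (nat \<Rightarrow> complex) \<Rightarrow> nat \<Rightarrow> nat \<Rightarrow> vec \<Rightarrow> vec" where
  "Bapp m u k 0 \<phi> = \<phi>"
| "Bapp m u k (Suc n) \<phi> = (if Suc n \<le> k then \<phi> else Yo m (u (Suc n)) (Bapp m u k n \<phi>))"

lemma Bapp_le: "n \<le> k \<Longrightarrow> Bapp m u k n \<phi> = \<phi>"
  by (induction n) auto

lemma loc_Ych: "loc m (Ych m u n)"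
  by (cases n) (auto simp: locY locom)

lemma loc_Bapp: "loc m \<phi> \<Longrightarrow> loc m (Bapp m u k n \<phi>)"
  by (induction n) (auto simp: locY)

lemma Bapp_lin:
  assumes "finite (K::nat set)"
  shows "Bapp m u k n (\<lambda>S. c0 * \<phi> S + (\<Sum>l\<in>K. c l * \<psi> l S)) = (\<lambda>S. c0 * Bapp m u k n \<phi> S + (\<Sum>l\<in>K. c l * Bapp m u k n (\<psi> l) S))"
proof (induction n)
  case 0 then show ?case by simp
next
  case (Suc n)
  show ?case
  proof (cases "Suc n \<le> k")
    case True then show ?thesis by simp
  next
    case False
    have "Bapp m u k (Suc n) (\<lambda>S. c0 * \<phi> S + (\<Sum>l\<in>K. c l * \<psi> l S))
        = Yo m (u (Suc n)) (\<lambda>S. c0 * Bapp m u k n \<phi> S + 1 * (\<Sum>l\<in>K. c l * Bapp m u k n (\<psi> l) S))"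
      using False Suc by simp
    also have "\<dots> = (\<lambda>S. c0 * Yo m (u (Suc n)) (Bapp m u k n \<phi>) S + 1 * Yo m (u (Suc n)) (\<lambda>S. \<Sum>l\<in>K. c l * Bapp m u k n (\<psi> l) S) S)"
      by (rule Y_lin2)
    also have "\<dots> = (\<lambda>S. c0 * Bapp m u k (Suc n) \<phi> S + (\<Sum>l\<in>K. c l * Bapp m u k (Suc n) (\<psi> l) S))"
      using False by (subst Y_lin[OF assms]) simp
    finally show ?thesis .
  qed
qed

lemma Bapp_Ych:
  assumes "1 \<le> k" "k \<le> n"
  shows "Bapp m u k n (Ych m v (k-1)) = Ych m (\<lambda>i. if i < k then v i else u (Suc i)) (n-1)"
  using assms
proof (induction n)
  case 0 then show ?case by simp
next
  case (Suc n)
  show ?case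
  proof (cases "Suc n = k")
    case True
    then show ?thesis by (simp add: Bapp_le del: Bapp.simps) (rule Yvf_cong, auto)
  next
    case False
    then have kn: "k \<le> n" using Suc.prems by simp
    have "Bapp m u k (Suc n) (Ych m v (k-1)) = Yo m (u (Suc n)) (Ych m (\<lambda>i. if i < k then v i else u (Suc i)) (n-1))"
      using False kn Suc by simp
    also have "\<dots> = Ych m (\<lambda>i. if i < k then v i else u (Suc i)) (Suc n - 1)"
      using kn Suc.prems by (cases n) auto
    finally show ?thesis .
  qed
qed

definition alpha :: "(nat \<Rightarrow> complex) \<Rightarrow> nat \<Rightarrow> nat \<Rightarrow> complex" where
  "alpha u n k = (\<Prod>i\<in>{1..<k}. p0 (u i)) * q (u k) * (\<Prod>i\<in>{Suc k..n}. p1 (u i))"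

definition F0 where "F0 m u n = (\<lambda>S. (\<Prod>i=1..n. p0 (u i)) * Ych m u n S)"
definition F1 where "F1 m u n = (\<lambda>S. \<Sum>k=1..n. alpha u n k * Bapp m u k n (Xo m (u k) (Ych m u (k-1))) S)"

lemma loc_F0: "loc m (F0 m u n)" unfolding F0_def by (rule loc_smult[OF loc_Ych])
lemma loc_F1: "loc m (F1 m u n)" unfolding F1_def by (rule loc_sum) (rule loc_Bapp[OF locX])

lemma chain_split: "Ych (Suc m) u n = (\<lambda>S. if flp m S then F1 m u n S else F0 m u n S)"
proof (induction n)
  case 0
  show ?case unfolding F0_def F1_def by (simp add: om_split cong: if_cong)
next
  case (Suc n)
  define w where "w = u (Suc n)"
  have pr0: "pr0 m (Ych (Suc m) u n) = F0 m u n" unfolding Suc by (rule pr0_split[OF loc_F0 loc_F1])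
  have pr1: "pr1 m (Ych (Suc m) u n) = F1 m u n" unfolding Suc by (rule pr1_split[OF loc_F0 loc_F1])
  have a1: "Yo m w (F0 m u n) = (\<lambda>S. (\<Prod>i=1..n. p0 (u i)) * Ych m u (Suc n) S)"
    unfolding F0_def by (simp add: Y_smult w_def)
  have a2: "Xo m w (F0 m u n) = (\<lambda>S. (\<Prod>i=1..n. p0 (u i)) * Bapp m u (Suc n) (Suc n) (Xo m (u (Suc n)) (Ych m u (Suc n - 1))) S)"
    unfolding F0_def by (simp add: X_smult w_def del: Bapp.simps add: Bapp_le)
  have a3: "Yo m w (F1 m u n) = (\<lambda>S. \<Sum>k=1..n. alpha u n k * Bapp m u k (Suc n) (Xo m (u k) (Ych m u (k-1))) S)"
    unfolding F1_def by (subst Y_lin) (auto simp: w_def)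
  have al1: "alpha u (Suc n) k = alpha u n k * p1 w" if "k \<in> {1..n}" for k
  proof -
    have "{Suc k..Suc n} = insert (Suc n) {Suc k..n}" using that by auto
    then show ?thesis using that by (simp add: alpha_def w_def ac_simps)
  qed
  have al2: "alpha u (Suc n) (Suc n) = (\<Prod>i=1..n. p0 (u i)) * q w"
    by (simp add: alpha_def w_def atLeastLessThanSuc_atLeastAtMost)
  show ?case
  proof (rule ext)
    fix S
    show "Ych (Suc m) u (Suc n) S = (if flp m S then F1 m u (Suc n) S else F0 m u (Suc n) S)"
    proof (cases "flp m S")
      case True
      have "Ych (Suc m) u (Suc n) S = p1 w * Yo m w (F1 m u n) S + q w * Xo m w (F0 m u n) S"
        using True by (simp add: Ysplit pr0 pr1 w_def)
      also have "\<dots> = (\<Sum>k=1..n. alpha u (Suc n) k * Bapp m u k (Suc n) (Xo m (u k) (Ych m u (k-1))) S)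
            + alpha u (Suc n) (Suc n) * Bapp m u (Suc n) (Suc n) (Xo m (u (Suc n)) (Ych m u (Suc n - 1))) S"
        unfolding a2 a3 al2 by (simp add: sum_distrib_left al1 ac_simps)
      also have "\<dots> = F1 m u (Suc n) S" by (simp add: F1_def del: Bapp.simps)
      finally show ?thesis using True by simp
    next
      case False
      have "Ych (Suc m) u (Suc n) S = p0 w * Yo m w (F0 m u n) S"
        using False by (simp add: Ysplit pr0 pr1 w_def)
      also have "\<dots> = F0 m u (Suc n) S" unfolding a1 by (simp add: F0_def w_def ac_simps)
      finally show ?thesis using False by simp
    qed
  qed
qed


definition gen :: "nat \<Rightarrow> (nat \<Rightarrow> complex) \<Rightarrow> bool" where
  "gen N u \<longleftrightarrow> (\<forall>i\<in>{1..N}. \<forall>j\<in>{1..N}. i \<noteq> j \<longrightarrow> ok (u i) (u j)) \<and> (\<forall>i\<in>{1..N}. nz (u i))"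

lemma gen_mono: "gen N u \<Longrightarrow> n \<le> N \<Longrightarrow> gen n u"
  unfolding gen_def by auto

lemma gen_skip: assumes "gen (Suc n) u" "l \<in> {1..Suc n}" shows "gen n (u \<circ> skip l)"
proof -
  have "skip l i \<in> {1..Suc n}" if "i \<in> {1..n}" for i using that by (auto simp: skip_def)
  then show ?thesis using assms unfolding gen_def by (auto simp: skip_inj)
qed

definition Coef :: "(nat \<Rightarrow> complex) \<Rightarrow> nat \<Rightarrow> nat \<Rightarrow> complex" where
  "Coef u N l = alpha u N l * (\<Prod>i\<in>{1..<l}. fc (u i) (u l))
     + (\<Sum>k\<in>{Suc l..N}. alpha u N k * gc (u k) (u l) * (\<Prod>i\<in>{1..<k}-{l}. fc (u i) (u l)))"

lemma alpha_Suc: "k \<le> N \<Longrightarrow> alpha u (Suc N) k = alpha u N k * p1 (u (Suc N))"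
proof -
  assume k: "k \<le> N"
  then have "{Suc k..Suc N} = insert (Suc N) {Suc k..N}" by auto
  then show ?thesis using k by (simp add: alpha_def ac_simps)
qed

lemma alpha_last: "alpha u (Suc N) (Suc N) = (\<Prod>i=1..N. p0 (u i)) * q (u (Suc N))"
  by (simp add: alpha_def atLeastLessThanSuc_atLeastAtMost)

lemma coef_aux: "gen (l+d) u \<Longrightarrow> 1 \<le> l \<Longrightarrow> Coef u (l+d) l = q (u l) * (\<Prod>i\<in>{1..l+d}-{l}. p0 (u i) * fc (u i) (u l))"
proof (induction d)
  case 0
  have e: "{1..l}-{l} = {1..<l}" by auto
  show ?case unfolding Coef_def alpha_def add_0_right e by (simp add: prod.distrib ac_simps)
next
  case (Suc d)
  define N where "N = l + d"
  define v where "v = u (Suc N)"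
  define w where "w = u l"
  have g: "gen N u" using Suc.prems gen_mono N_def by auto
  have IH: "Coef u N l = q w * (\<Prod>i\<in>{1..N}-{l}. p0 (u i) * fc (u i) w)"
    using Suc.IH g Suc.prems by (simp add: N_def w_def)
  have okvw: "ok v w" "nz v" "nz w" using Suc.prems unfolding gen_def v_def w_def N_def by auto
  have s1: "{Suc l..Suc N} = insert (Suc N) {Suc l..N}" by (auto simp: N_def)
  have s2: "{1..<Suc N}-{l} = {1..N}-{l}" by auto
  have s3: "{1..Suc N}-{l} = insert (Suc N) ({1..N}-{l})" using Suc.prems by (auto simp: N_def)
  have s4: "(\<Prod>i=1..N. p0 (u i)) = p0 w * (\<Prod>i\<in>{1..N}-{l}. p0 (u i))"
  proof -
    have "{1..N} = insert l ({1..N}-{l})" using Suc.prems by (auto simp: N_def)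
    moreover have "l \<notin> {1..N}-{l}" by simp
    ultimately show ?thesis unfolding w_def by (metis finite_Diff finite_atLeastAtMost prod.insert)
  qed
  define P where "P = (\<Prod>i\<in>{1..<l}. fc (u i) w)"
  define A where "A = (\<Prod>i\<in>{1..N}-{l}. p0 (u i))"
  define B where "B = (\<Prod>i\<in>{1..N}-{l}. fc (u i) w)"
  define Sm where "Sm = (\<Sum>k\<in>{Suc l..N}. alpha u N k * gc (u k) w * (\<Prod>i\<in>{1..<k}-{l}. fc (u i) w))"
  have a: "alpha u (Suc N) k = alpha u N k * p1 v" if "k \<le> N" for k using alpha_Suc[OF that] by (simp add: v_def)
  have sum1: "(\<Sum>k\<in>{Suc l..Suc N}. alpha u (Suc N) k * gc (u k) w * (\<Prod>i\<in>{1..<k}-{l}. fc (u i) w))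
        = (\<Sum>k\<in>{Suc l..N}. alpha u (Suc N) k * gc (u k) w * (\<Prod>i\<in>{1..<k}-{l}. fc (u i) w))
          + alpha u (Suc N) (Suc N) * gc v w * B"
    unfolding s1 B_def by (simp add: v_def atLeastLessThanSuc_atLeastAtMost)
  have sum2: "(\<Sum>k\<in>{Suc l..N}. alpha u (Suc N) k * gc (u k) w * (\<Prod>i\<in>{1..<k}-{l}. fc (u i) w)) = p1 v * Sm"
    unfolding Sm_def sum_distrib_left by (rule sum.cong) (auto simp: a)
  have cN: "Coef u N l = alpha u N l * P + Sm" unfolding Coef_def P_def Sm_def w_def ..
  have cSN: "Coef u (Suc N) l = alpha u N l * p1 v * P + p1 v * Sm + p0 w * A * q v * gc v w * B"
  proof -
    have "Coef u (Suc N) l = alpha u (Suc N) l * P + (p1 v * Sm + alpha u (Suc N) (Suc N) * gc v w * B)"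
      unfolding Coef_def P_def w_def[symmetric] sum1 sum2 ..
    also have "alpha u (Suc N) l = alpha u N l * p1 v" using a[of l] by (simp add: N_def)
    also have "alpha u (Suc N) (Suc N) = p0 w * A * q v" unfolding alpha_last s4 A_def v_def ..
    finally show ?thesis by (simp add: algebra_simps)
  qed
  have IH': "alpha u N l * P + Sm = q w * (A * B)" using IH unfolding cN A_def B_def prod.distrib .
  have "Coef u (Suc N) l = p1 v * (alpha u N l * P + Sm) + p0 w * A * q v * gc v w * B"
    unfolding cSN by (simp add: algebra_simps)
  also have "\<dots> = (A * B) * (p1 v * q w + p0 w * q v * gc v w)" unfolding IH' by (simp add: algebra_simps)
  also have "\<dots> = (A * B) * (q w * p0 v * fc v w)" unfolding M4[OF okvw] ..
  also have "\<dots> = q w * (\<Prod>i\<in>{1..Suc N}-{l}. p0 (u i) * fc (u i) w)"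
    unfolding s3 A_def B_def by (simp add: prod.distrib v_def ac_simps)
  finally show ?case by (simp add: N_def w_def)
qed

lemma coef: "gen N u \<Longrightarrow> l \<in> {1..N} \<Longrightarrow> Coef u N l = q (u l) * (\<Prod>i\<in>{1..N}-{l}. p0 (u i) * fc (u i) (u l))"
  using coef_aux[of l "N - l" u] by auto


lemma skip_fun: "(\<lambda>i. if i < k then u i else u (Suc i)) = u \<circ> skip k"
  by (auto simp: skip_def)

lemma strict_mono_restr: "strict_mono_on {1..Suc n} x \<Longrightarrow> strict_mono_on {1..n} x"
  by (auto simp: strict_mono_on_def)

lemma strict_mono_le: "strict_mono_on {1..Suc n} x \<Longrightarrow> j \<in> {1..n} \<Longrightarrow> x j < x (Suc n)"
  by (auto simp: strict_mono_on_def)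

lemma move_term:
  assumes g: "gen N u" and k: "k \<in> {1..N}" and n: "N = Suc n"
  shows "Bapp m u k N (Xo m (u k) (Ych m u (k-1))) = (\<lambda>S. dd m (u k) * (\<Prod>i\<in>{1..<k}. fc (u i) (u k)) * Ych m (u \<circ> skip k) n S
     + (\<Sum>l\<in>{1..<k}. gc (u k) (u l) * dd m (u l) * (\<Prod>i\<in>{1..<k}-{l}. fc (u i) (u l)) * Ych m (u \<circ> skip l) n S))"
proof -
  have k1: "1 \<le> k" "k \<le> N" using k by auto
  have ok1: "\<forall>i\<in>{1..k-1}. \<forall>j\<in>{1..k-1}. i \<noteq> j \<longrightarrow> ok (u i) (u j)" "\<forall>i\<in>{1..k-1}. ok (u i) (u k)"
    using g k1 unfolding gen_def by auto
  have e1: "{1..k-1} = {1..<k}" using k1 by auto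
  have mvk: "Xo m (u k) (Ych m u (k-1)) = (\<lambda>S. (dd m (u k) * (\<Prod>i\<in>{1..<k}. fc (u i) (u k))) * Ych m u (k-1) S
     + (\<Sum>l\<in>{1..<k}. (gc (u k) (u l) * dd m (u l) * (\<Prod>i\<in>{1..<k}-{l}. fc (u i) (u l))) * Yo m (u k) (Ych m (u \<circ> skip l) (k-1-1)) S))"
    using mover.moving[OF mv ok1] unfolding e1 by simp
  have b1: "Bapp m u k N (Ych m u (k-1)) = Ych m (u \<circ> skip k) n"
    using Bapp_Ych[OF k1] n by (simp add: skip_fun)
  have b2: "Bapp m u k N (Yo m (u k) (Ych m (u \<circ> skip l) (k - Suc (Suc 0)))) = Ych m (u \<circ> skip l) n" if l1: "Suc 0 \<le> l" and l2: "l < k" for l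
  proof -
    have l: "l \<in> {1..<k}" using l1 l2 by auto
    have kk: "k - Suc (Suc 0) = k-1-1" by simp
    have k2: "2 \<le> k" using l by auto
    define j where "j = k - 2"
    have kj: "k = Suc (Suc j)" using k2 by (simp add: j_def)
    have lj: "l \<le> Suc j" using l kj by auto
    have s1: "skip l (Suc j) = k" using lj kj by (simp add: skip_def)
    have y1: "Yo m (u k) (Ych m (u \<circ> skip l) (k-1-1)) = Ych m (u \<circ> skip l) (k-1)"
      by (simp add: kj s1[unfolded kj])
    have fin: "Bapp m u k N (Yo m (u k) (Ych m (u \<circ> skip l) (k-1-1))) = Ych m (\<lambda>i. if i < k then (u \<circ> skip l) i else u (Suc i)) (N-1)"
      unfolding y1 by (rule Bapp_Ych[OF k1])
    have fe: "(\<lambda>i. if i < k then (u \<circ> skip l) i else u (Suc i)) = u \<circ> skip l"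
    proof
      fix i show "(if i < k then (u \<circ> skip l) i else u (Suc i)) = (u \<circ> skip l) i"
        using l by (simp add: skip_def)
    qed
    show ?thesis using fin unfolding fe kk by (simp add: n)
  qed
  show ?thesis
    unfolding mvk Bapp_lin[OF finite_atLeastLessThan] b1
    by (rule ext, rule arg_cong2[where f="(+)"]) (auto intro!: sum.cong simp: b2 ac_simps)
qed

theorem main:
  "strict_mono_on {1..N} x \<Longrightarrow> x ` {1..N} \<subseteq> {1..M} \<Longrightarrow> gen N u \<Longrightarrow>
   Ych M u N (tgt M N x) = BF \<pi>f \<rho> h s z M N x u"
proof (induction M arbitrary: N x u)
  case 0
  then have "N = 0" by (cases N) auto
  then show ?case by (simp add: tgt0 BF_0)
next
  case (Suc m)
  show ?case
  proof (cases N)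
    case 0
    then show ?thesis by (simp add: tgt0 BF_0)
  next
    case (Suc n)
    define T where "T = tgt (Suc m) N x"
    have sm: "strict_mono_on {1..Suc n} x" and im: "x ` {1..Suc n} \<subseteq> {1..Suc m}" and g: "gen (Suc n) u"
      using Suc.prems Suc by auto
    have cs: "Ych (Suc m) u N T = (if flp m T then F1 m u N T else F0 m u N T)"
      by (simp add: chain_split)
    show ?thesis
    proof (cases "x (Suc n) = Suc m")
      case True
      have fl: "flp m T" unfolding T_def Suc using tgt_flp[OF sm im] True by simp
      have imn: "x ` {1..n} \<subseteq> {1..m}" using strict_mono_le[OF sm] im True by fastforce
      have BFm: "Ych m (u \<circ> skip l) n T = BF \<pi>f \<rho> h s z m n x (u \<circ> skip l)" if l: "l \<in> {1..N}" for l
      proof -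
        have "Ych m (u \<circ> skip l) n T = Ych m (u \<circ> skip l) n (tgt m n x)"
          by (rule locD[OF loc_Ych]) (unfold T_def Suc, rule tgt_r2[OF sm im True])
        also have "\<dots> = BF \<pi>f \<rho> h s z m n x (u \<circ> skip l)"
          by (rule Suc.IH[OF strict_mono_restr[OF sm] imn gen_skip[OF g]]) (use l Suc in auto)
        finally show ?thesis .
      qed
      define BB where "BB l = BF \<pi>f \<rho> h s z m n x (u \<circ> skip l)" for l
      have "Ych (Suc m) u N T = (\<Sum>k=1..N. alpha u N k * Bapp m u k N (Xo m (u k) (Ych m u (k-1))) T)"
        using cs fl by (simp add: F1_def)
      also have "\<dots> = (\<Sum>k=1..N. alpha u N k * (dd m (u k) * (\<Prod>i\<in>{1..<k}. fc (u i) (u k)) * BB k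
           + (\<Sum>l\<in>{1..<k}. gc (u k) (u l) * dd m (u l) * (\<Prod>i\<in>{1..<k}-{l}. fc (u i) (u l)) * BB l)))"
      proof (rule sum.cong[OF refl])
        fix k assume k: "k \<in> {1..N}"
        have "BB l = Ych m (u \<circ> skip l) n T" if "l \<in> {1..<k}" for l using BFm[of l] that k by (simp add: BB_def)
        then show "alpha u N k * Bapp m u k N (Xo m (u k) (Ych m u (k-1))) T = alpha u N k * (dd m (u k) * (\<Prod>i\<in>{1..<k}. fc (u i) (u k)) * BB k
           + (\<Sum>l\<in>{1..<k}. gc (u k) (u l) * dd m (u l) * (\<Prod>i\<in>{1..<k}-{l}. fc (u i) (u l)) * BB l))"
          unfolding move_term[OF g[folded Suc] k Suc] using BFm[OF k] by (simp add: BB_def)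
      qed
      also have "\<dots> = (\<Sum>k=1..N. alpha u N k * dd m (u k) * (\<Prod>i\<in>{1..<k}. fc (u i) (u k)) * BB k)
           + (\<Sum>k=1..N. \<Sum>l\<in>{1..<k}. alpha u N k * gc (u k) (u l) * dd m (u l) * (\<Prod>i\<in>{1..<k}-{l}. fc (u i) (u l)) * BB l)"
        by (simp add: sum.distrib distrib_left sum_distrib_left ac_simps)
      also have "\<dots> = (\<Sum>l=1..N. BB l * dd m (u l) * Coef u N l)"
        unfolding tri_swap sum.distrib[symmetric] Coef_def
        by (rule sum.cong[OF refl]) (simp add: distrib_left distrib_right sum_distrib_left sum_distrib_right ac_simps)
      also have "\<dots> = (\<Sum>l=1..N. BB l * dd m (u l) * (q (u l) * (\<Prod>i\<in>{1..N}-{l}. p0 (u i) * fc (u i) (u l))))"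
        by (rule sum.cong[OF refl]) (simp add: coef[OF g[folded Suc]])
      also have "\<dots> = BF \<pi>f \<rho> h s z (Suc m) N x u"
      proof -
        have "BF \<pi>f \<rho> h s z (Suc m) N x u = (\<Sum>l=1..Suc n. \<pi>f (u l) * \<rho> (u l)^(Suc m) * z (u l)^(x (Suc n))
             * (\<Prod>j\<in>{j\<in>{1..Suc n}. j < l}. h (u j) (u l)) * (\<Prod>k\<in>{Suc l..Suc n}. h (u l) (u k) * s (u l) (u k))
             * BF \<pi>f \<rho> h s z (Suc m) n x (u \<circ> skip l))"
          unfolding Suc by (rule BF_laplace)
        also have "\<dots> = (\<Sum>l=1..N. BB l * dd m (u l) * (q (u l) * (\<Prod>i\<in>{1..N}-{l}. p0 (u i) * fc (u i) (u l))))"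
        proof (rule sum.cong)
          show "{1..Suc n} = {1..N}" using Suc by simp
        next
          fix l assume l: "l \<in> {1..N}"
          have nzl: "nz (u l)" using g l Suc unfolding gen_def by auto
          have okl: "ok (u i) (u l)" if "i \<in> {1..N}" "i \<noteq> l" for i using g l that Suc unfolding gen_def by auto
          have h1: "(\<Prod>j\<in>{j\<in>{1..Suc n}. j < l}. h (u j) (u l)) = (\<Prod>j\<in>{1..<l}. fc (u j) (u l))"
          proof -
            have "{j\<in>{1..Suc n}. j < l} = {1..<l}" using l Suc by auto
            moreover have "h (u j) (u l) = fc (u j) (u l)" if "j \<in> {1..<l}" for j
              using okl[of j] that l Suc M3a[of "u j" "u l"] by auto
            ultimately show ?thesis by (metis (no_types, lifting) prod.cong)
          qed
          have h2: "(\<Prod>k\<in>{Suc l..Suc n}. h (u l) (u k) * s (u l) (u k)) = (\<Prod>k\<in>{Suc l..N}. fc (u k) (u l))"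
            using okl by (auto intro!: prod.cong simp: M3b Suc)
          have h3: "(\<Prod>i\<in>{1..N}-{l}. fc (u i) (u l)) = (\<Prod>j\<in>{1..<l}. fc (u j) (u l)) * (\<Prod>k\<in>{Suc l..N}. fc (u k) (u l))"
          proof -
            have "{1..N}-{l} = {1..<l} \<union> {Suc l..N}" using l by auto
            moreover have "(\<Prod>i\<in>{1..<l} \<union> {Suc l..N}. fc (u i) (u l)) = (\<Prod>j\<in>{1..<l}. fc (u j) (u l)) * (\<Prod>k\<in>{Suc l..N}. fc (u k) (u l))"
              by (rule prod.union_disjoint) auto
            ultimately show ?thesis by simp
          qed
          have r: "BF \<pi>f \<rho> h s z (Suc m) n x (u \<circ> skip l) = (\<Prod>i\<in>{1..N}-{l}. \<rho> (u i)) * BB l"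
          proof -
            have "(\<Prod>j=1..n. \<rho> ((u \<circ> skip l) j)) = (\<Prod>i\<in>skip l ` {1..n}. \<rho> (u i))"
              by (subst prod.reindex) (auto simp: inj_on_def skip_inj)
            also have "skip l ` {1..n} = {1..N}-{l}" using skip_image[of l n] l Suc by simp
            finally show ?thesis by (simp add: BF_Suc_M BB_def)
          qed
          have m1: "\<pi>f (u l) * \<rho> (u l)^(Suc m) * z (u l)^(x (Suc n)) = q (u l) * dd m (u l)"
            using M1[OF nzl] True by simp
          show "\<pi>f (u l) * \<rho> (u l)^(Suc m) * z (u l)^(x (Suc n))
             * (\<Prod>j\<in>{j\<in>{1..Suc n}. j < l}. h (u j) (u l)) * (\<Prod>k\<in>{Suc l..Suc n}. h (u l) (u k) * s (u l) (u k))
             * BF \<pi>f \<rho> h s z (Suc m) n x (u \<circ> skip l) = BB l * dd m (u l) * (q (u l) * (\<Prod>i\<in>{1..N}-{l}. p0 (u i) * fc (u i) (u l)))"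
            unfolding m1 h1 h2 r unfolding prod.distrib unfolding h3 by (simp add: M2 ac_simps)
        qed
        finally show ?thesis ..
      qed
      finally show ?thesis unfolding T_def .
    next
      case False
      have "x (Suc n) \<in> {1..Suc m}" 
      proof -
        have "Suc n \<in> {1..Suc n}" by simp
        then have "x (Suc n) \<in> x ` {1..Suc n}" by (rule imageI)
        then show ?thesis using im by (rule subsetD[rotated])
      qed
      then have xle: "x (Suc n) \<le> m" using False by auto
      have imN: "x ` {1..N} \<subseteq> {1..m}"
      proof
        fix y assume "y \<in> x ` {1..N}"
        then obtain j where j: "j \<in> {1..Suc n}" "y = x j" using Suc by auto
        then have "x j \<le> x (Suc n)"
        proof (cases "j = Suc n")
          case False
          then have "j \<in> {1..n}" using j by auto
          then show ?thesis using strict_mono_le[OF sm] by (simp add: less_imp_le)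
        qed simp
        moreover have "x j \<in> {1..Suc m}" using imageI[OF j(1), of x] im by (rule subsetD[rotated])
        ultimately show "y \<in> {1..m}" using j xle by auto
      qed
      have fl: "\<not> flp m T" unfolding T_def Suc using tgt_flp[OF sm im] False by simp
      have e1: "Ych (Suc m) u N T = (\<Prod>i=1..N. p0 (u i)) * Ych m u N T"
        using cs fl by (simp add: F0_def)
      have e2: "Ych m u N T = Ych m u N (tgt m N x)"
        by (rule locD[OF loc_Ych]) (unfold T_def, rule tgt_r1[OF imN])
      have e3: "Ych m u N (tgt m N x) = BF \<pi>f \<rho> h s z m N x u" by (rule Suc.IH[OF Suc.prems(1) imN Suc.prems(3)])
      show ?thesis unfolding T_def[symmetric] e1 e2 e3 by (simp add: BF_Suc_M M2)
    qed
  qed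
qed

end


definition Rm :: "complex \<Rightarrow> complex \<Rightarrow> complex \<Rightarrow> bool \<Rightarrow> bool \<Rightarrow> bool \<Rightarrow> bool \<Rightarrow> complex" where
"Rm t u v g1 g2 b1 b2 = (if g1=b1 \<and> g2=b2 then (if g1 = g2 then u - t*v else if g1 = False then t*(u-v) else u - v)
   else if g1 \<noteq> g2 \<and> b1 = g2 \<and> b2 = g1 then (if g1 = False then (1-t)*u else (1-t)*v) else 0)"

definition bsum :: "(bool \<Rightarrow> complex) \<Rightarrow> complex" where "bsum h = h False + h True"

lemma bsum_cmult: "c * bsum f = bsum (\<lambda>x. c * f x)" by (simp add: bsum_def algebra_simps)
lemma bsum_multc: "bsum f * c = bsum (\<lambda>x. f x * c)" by (simp add: bsum_def algebra_simps)
lemma bsum_swap: "bsum (\<lambda>x. bsum (\<lambda>y. f x y)) = bsum (\<lambda>y. bsum (\<lambda>x. f x y))" by (simp add: bsum_def algebra_simps)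
lemma bsum_cong: "(\<And>x. f x = g x) \<Longrightarrow> bsum f = bsum g" by (simp add: bsum_def)
lemma bsum_add: "bsum (\<lambda>x. f x + g x) = bsum f + bsum g" by (simp add: bsum_def algebra_simps)
lemma sum_bsum: "(\<Sum>R\<in>A. bsum (\<lambda>x. f x R)) = bsum (\<lambda>x. \<Sum>R\<in>A. f x R)" by (simp add: bsum_def sum.distrib)

lemma local_ybe:
  assumes rel1: "c*d + a*f = 0" and rel2: "t*c*d + b*e = 0"
  shows "bsum (\<lambda>i1. bsum (\<lambda>i2. Rm t u v g1 g2 i1 i2 * bsum (\<lambda>r. Lent t a b c d e f u i1 s' a1 r * Lent t a b c d e f v i2 r a2 s)))
       = bsum (\<lambda>o1. bsum (\<lambda>o2. bsum (\<lambda>r. Lent t a b c d e f v g2 s' o2 r * Lent t a b c d e f u g1 r o1 s) * Rm t u v o1 o2 a1 a2))"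
  using rel1 rel2
  by (cases g1; cases g2; cases s'; cases a1; cases a2; cases s; simp add: bsum_def Lent_def Rm_def; (simp add: algebra_simps)?; (algebra)?)

lemma mono_loc:
  "(\<forall>i\<in>{1..m}. (i \<in> S1 \<longleftrightarrow> i \<in> S2) \<and> (i \<in> T1 \<longleftrightarrow> i \<in> T2)) \<Longrightarrow> mono t a b c d e f m u g \<alpha> S1 T1 = mono t a b c d e f m u g \<alpha> S2 T2"
proof (induction m arbitrary: g)
  case 0 then show ?case by simp
next
  case (Suc m)
  have "mono t a b c d e f m u \<beta> \<alpha> S1 T1 = mono t a b c d e f m u \<beta> \<alpha> S2 T2" for \<beta>
    using Suc by auto
  moreover have "(Suc m \<in> S1 \<longleftrightarrow> Suc m \<in> S2) \<and> (Suc m \<in> T1 \<longleftrightarrow> Suc m \<in> T2)" using Suc.prems by auto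
  ultimately show ?case by simp
qed

lemma mono_loc_ins1: "mono t a b c d e f m u g \<alpha> (insert (Suc m) S) T = mono t a b c d e f m u g \<alpha> S T"
  by (rule mono_loc) auto
lemma mono_loc_ins2: "mono t a b c d e f m u g \<alpha> S (insert (Suc m) T) = mono t a b c d e f m u g \<alpha> S T"
  by (rule mono_loc) auto
lemma mono_loc_del1: "mono t a b c d e f m u g \<alpha> (S - {Suc m}) T = mono t a b c d e f m u g \<alpha> S T"
  by (rule mono_loc) auto
lemma mono_loc_del2: "mono t a b c d e f m u g \<alpha> S (T - {Suc m}) = mono t a b c d e f m u g \<alpha> S T"
  by (rule mono_loc) auto

lemma mono_Suc_bsum: "mono t a b c d e f (Suc m) u g \<alpha> S' S =
   bsum (\<lambda>\<beta>. Lent t a b c d e f u g (Suc m \<in> S') \<beta> (Suc m \<in> S) * mono t a b c d e f m u \<beta> \<alpha> S' S)"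
  by (simp add: bsum_def)

lemma sum_Pow_Suc:
  "(\<Sum>R\<in>Pow {1..Suc m}. F R) = (\<Sum>R\<in>Pow {1..m}. F R) + (\<Sum>R\<in>Pow {1..m}. F (insert (Suc m) R))"
proof -
  have e: "{1..Suc m} = insert (Suc m) {1..m}" by auto
  have d: "Pow {1..m} \<inter> insert (Suc m) ` Pow {1..m} = {}" by auto
  have i: "inj_on (insert (Suc m)) (Pow {1..m})"
    by (rule inj_onI) (metis Pow_iff atLeastAtMost_iff insert_ident lessI not_less subset_eq)
  have "sum F (Pow {1..m} \<union> insert (Suc m) ` Pow {1..m}) = sum F (Pow {1..m}) + sum F (insert (Suc m) ` Pow {1..m})"
    by (rule sum.union_disjoint[OF _ _ d]) auto
  moreover have "sum F (insert (Suc m) ` Pow {1..m}) = (\<Sum>R\<in>Pow {1..m}. F (insert (Suc m) R))"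
    by (rule sum.reindex_cong[OF i refl refl])
  ultimately show ?thesis unfolding e Pow_insert by simp
qed

definition opP where "opP t a b c d e f m u v g1 a1 g2 a2 S' S =
   (\<Sum>R\<in>Pow {1..m}. mono t a b c d e f m u g1 a1 S' R * mono t a b c d e f m v g2 a2 R S)"

lemma opP_Suc: "opP t a b c d e f (Suc m) u v g1 a1 g2 a2 S' S =
   bsum (\<lambda>\<beta>1. bsum (\<lambda>\<beta>2. bsum (\<lambda>r. Lent t a b c d e f u g1 (Suc m \<in> S') \<beta>1 r * Lent t a b c d e f v g2 r \<beta>2 (Suc m \<in> S)
        * opP t a b c d e f m u v \<beta>1 a1 \<beta>2 a2 S' S)))"
proof -
  let ?L = "Lent t a b c d e f" and ?m = "mono t a b c d e f"
  have A: "?m (Suc m) u g1 a1 S' R * ?m (Suc m) v g2 a2 R S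
     = bsum (\<lambda>\<beta>1. bsum (\<lambda>\<beta>2. ?L u g1 (Suc m \<in> S') \<beta>1 False * ?L v g2 False \<beta>2 (Suc m \<in> S) * (?m m u \<beta>1 a1 S' R * ?m m v \<beta>2 a2 R S)))"
    if "R \<in> Pow {1..m}" for R
  proof -
    have "Suc m \<notin> R" using that by auto
    then show ?thesis unfolding mono_Suc_bsum by (simp add: bsum_def algebra_simps)
  qed
  have B: "?m (Suc m) u g1 a1 S' (insert (Suc m) R) * ?m (Suc m) v g2 a2 (insert (Suc m) R) S
     = bsum (\<lambda>\<beta>1. bsum (\<lambda>\<beta>2. ?L u g1 (Suc m \<in> S') \<beta>1 True * ?L v g2 True \<beta>2 (Suc m \<in> S) * (?m m u \<beta>1 a1 S' R * ?m m v \<beta>2 a2 R S)))"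
    for R
    unfolding mono_Suc_bsum by (simp add: bsum_def algebra_simps mono_loc_ins1 mono_loc_ins2)
  have "opP t a b c d e f (Suc m) u v g1 a1 g2 a2 S' S
     = (\<Sum>R\<in>Pow {1..m}. bsum (\<lambda>\<beta>1. bsum (\<lambda>\<beta>2. ?L u g1 (Suc m \<in> S') \<beta>1 False * ?L v g2 False \<beta>2 (Suc m \<in> S) * (?m m u \<beta>1 a1 S' R * ?m m v \<beta>2 a2 R S))))
     + (\<Sum>R\<in>Pow {1..m}. bsum (\<lambda>\<beta>1. bsum (\<lambda>\<beta>2. ?L u g1 (Suc m \<in> S') \<beta>1 True * ?L v g2 True \<beta>2 (Suc m \<in> S) * (?m m u \<beta>1 a1 S' R * ?m m v \<beta>2 a2 R S))))"
    unfolding opP_def sum_Pow_Suc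
    apply (intro arg_cong2[where f="(+)"] sum.cong refl)
     apply (rule A, assumption)
    apply (rule B)
    done
  also have "\<dots> = bsum (\<lambda>\<beta>1. bsum (\<lambda>\<beta>2. bsum (\<lambda>r. ?L u g1 (Suc m \<in> S') \<beta>1 r * ?L v g2 r \<beta>2 (Suc m \<in> S)
        * opP t a b c d e f m u v \<beta>1 a1 \<beta>2 a2 S' S)))"
    unfolding opP_def by (simp add: bsum_def sum.distrib sum_distrib_left algebra_simps)
  finally show ?thesis .
qed


lemma RTT:
  assumes rel1: "c*d + a*f = 0" and rel2: "t*c*d + b*e = 0"
  shows "bsum (\<lambda>b1. bsum (\<lambda>b2. Rm t u v g1 g2 b1 b2 * opP t a b c d e f m u v b1 a1 b2 a2 S' S))
       = bsum (\<lambda>b1. bsum (\<lambda>b2. opP t a b c d e f m v u g2 b2 g1 b1 S' S * Rm t u v b1 b2 a1 a2))"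
proof (induction m arbitrary: g1 g2 a1 a2)
  case 0
  show ?case by (cases g1; cases g2; cases a1; cases a2) (simp_all add: opP_def bsum_def Rm_def)
next
  case (Suc m)
  define s1 where "s1 = (Suc m \<in> S')"
  define s2 where "s2 = (Suc m \<in> S)"
  define K where "K b1 b2 \<beta>1 \<beta>2 = bsum (\<lambda>r. Lent t a b c d e f u b1 s1 \<beta>1 r * Lent t a b c d e f v b2 r \<beta>2 s2)" for b1 b2 \<beta>1 \<beta>2
  define K' where "K' o1 o2 = bsum (\<lambda>r. Lent t a b c d e f v g2 s1 o2 r * Lent t a b c d e f u g1 r o1 s2)" for o1 o2
  define Q where "Q \<beta>1 \<beta>2 = opP t a b c d e f m u v \<beta>1 a1 \<beta>2 a2 S' S" for \<beta>1 \<beta>2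
  define Q' where "Q' o1 o2 \<beta>1 \<beta>2 = opP t a b c d e f m v u o2 \<beta>2 o1 \<beta>1 S' S" for o1 o2 \<beta>1 \<beta>2
  define R where "R x1 x2 y1 y2 = Rm t u v x1 x2 y1 y2" for x1 x2 y1 y2
  have P1: "opP t a b c d e f (Suc m) u v b1 a1 b2 a2 S' S = bsum (\<lambda>\<beta>1. bsum (\<lambda>\<beta>2. K b1 b2 \<beta>1 \<beta>2 * Q \<beta>1 \<beta>2))" for b1 b2
    unfolding opP_Suc K_def Q_def s1_def s2_def by (simp add: bsum_def algebra_simps)
  have P2: "opP t a b c d e f (Suc m) v u g2 b2 g1 b1 S' S = bsum (\<lambda>o1. bsum (\<lambda>o2. K' o1 o2 * Q' o1 o2 b1 b2))" for b1 b2
    unfolding opP_Suc K'_def Q'_def s1_def s2_def by (simp add: bsum_def algebra_simps)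
  have ybe: "bsum (\<lambda>b1. bsum (\<lambda>b2. R g1 g2 b1 b2 * K b1 b2 \<beta>1 \<beta>2)) = bsum (\<lambda>o1. bsum (\<lambda>o2. K' o1 o2 * R o1 o2 \<beta>1 \<beta>2))" for \<beta>1 \<beta>2
    unfolding R_def K_def K'_def using local_ybe[OF rel1 rel2] by blast
  have IH: "bsum (\<lambda>\<beta>1. bsum (\<lambda>\<beta>2. R o1 o2 \<beta>1 \<beta>2 * Q \<beta>1 \<beta>2)) = bsum (\<lambda>b1. bsum (\<lambda>b2. Q' o1 o2 b1 b2 * R b1 b2 a1 a2))" for o1 o2
    unfolding R_def Q_def Q'_def by (rule Suc.IH)
  have "bsum (\<lambda>b1. bsum (\<lambda>b2. R g1 g2 b1 b2 * opP t a b c d e f (Suc m) u v b1 a1 b2 a2 S' S))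
      = bsum (\<lambda>\<beta>1. bsum (\<lambda>\<beta>2. bsum (\<lambda>b1. bsum (\<lambda>b2. R g1 g2 b1 b2 * K b1 b2 \<beta>1 \<beta>2)) * Q \<beta>1 \<beta>2))"
    unfolding P1 by (simp add: bsum_def algebra_simps)
  also have "\<dots> = bsum (\<lambda>\<beta>1. bsum (\<lambda>\<beta>2. bsum (\<lambda>o1. bsum (\<lambda>o2. K' o1 o2 * R o1 o2 \<beta>1 \<beta>2)) * Q \<beta>1 \<beta>2))"
    unfolding ybe ..
  also have "\<dots> = bsum (\<lambda>o1. bsum (\<lambda>o2. K' o1 o2 * bsum (\<lambda>\<beta>1. bsum (\<lambda>\<beta>2. R o1 o2 \<beta>1 \<beta>2 * Q \<beta>1 \<beta>2))))"
    by (simp add: bsum_def algebra_simps)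
  also have "\<dots> = bsum (\<lambda>o1. bsum (\<lambda>o2. K' o1 o2 * bsum (\<lambda>b1. bsum (\<lambda>b2. Q' o1 o2 b1 b2 * R b1 b2 a1 a2))))"
    unfolding IH ..
  also have "\<dots> = bsum (\<lambda>b1. bsum (\<lambda>b2. opP t a b c d e f (Suc m) v u g2 b2 g1 b1 S' S * R b1 b2 a1 a2))"
    unfolding P2 by (simp add: bsum_def algebra_simps)
  finally show ?case unfolding R_def .
qed


definition app :: "nat \<Rightarrow> (nat set \<Rightarrow> nat set \<Rightarrow> complex) \<Rightarrow> vec \<Rightarrow> vec" where
  "app m X \<phi> = (\<lambda>S'. \<Sum>R\<in>Pow {1..m}. X S' R * \<phi> R)"
definition capp :: "nat \<Rightarrow> (nat set \<Rightarrow> nat set \<Rightarrow> complex) \<Rightarrow> vec \<Rightarrow> vec" where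
  "capp m X \<phi> = (\<lambda>S. \<Sum>R\<in>Pow {1..m}. \<phi> R * X R S)"

lemma app_app: "app m X (app m Y \<phi>) = (\<lambda>S'. \<Sum>S\<in>Pow {1..m}. (\<Sum>R\<in>Pow {1..m}. X S' R * Y R S) * \<phi> S)"
  unfolding app_def by (auto simp: sum_distrib_left sum_distrib_right mult.assoc intro: sum.swap)

lemma capp_capp: "capp m X (capp m Y \<phi>) = (\<lambda>S. \<Sum>R'\<in>Pow {1..m}. \<phi> R' * (\<Sum>R\<in>Pow {1..m}. Y R' R * X R S))"
  unfolding capp_def by (auto simp: sum_distrib_left sum_distrib_right mult.assoc mult.left_commute intro: sum.swap)

lemma app_lin: "finite (K::nat set) \<Longrightarrow> app m X (\<lambda>S. \<Sum>k\<in>K. c k * \<phi> k S) = (\<lambda>S. \<Sum>k\<in>K. c k * app m X (\<phi> k) S)"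
  unfolding app_def by (auto simp: sum_distrib_left mult.left_commute intro: sum.swap)
lemma app_lin2: "app m X (\<lambda>S. c1 * \<phi> S + c2 * \<psi> S) = (\<lambda>S. c1 * app m X \<phi> S + c2 * app m X \<psi> S)"
  unfolding app_def by (auto simp: sum.distrib sum_distrib_left algebra_simps)
lemma capp_lin: "finite (K::nat set) \<Longrightarrow> capp m X (\<lambda>S. \<Sum>k\<in>K. c k * \<phi> k S) = (\<lambda>S. \<Sum>k\<in>K. c k * capp m X (\<phi> k) S)"
  unfolding capp_def by (auto simp: sum_distrib_left sum_distrib_right mult.assoc intro: sum.swap)
lemma capp_lin2: "capp m X (\<lambda>S. c1 * \<phi> S + c2 * \<psi> S) = (\<lambda>S. c1 * capp m X \<phi> S + c2 * capp m X \<psi> S)"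
  unfolding capp_def by (auto simp: sum.distrib sum_distrib_left algebra_simps)
lemma app_smult: "app m X (\<lambda>S. c * \<phi> S) = (\<lambda>S. c * app m X \<phi> S)"
  unfolding app_def by (auto simp: sum_distrib_left algebra_simps)
lemma capp_smult: "capp m X (\<lambda>S. c * \<phi> S) = (\<lambda>S. c * capp m X \<phi> S)"
  unfolding capp_def by (auto simp: sum_distrib_left algebra_simps)

lemma loc_mono1: "loc m (\<lambda>S'. mono t a b c d e f m u g \<alpha> S' R)"
  by (rule locI, rule mono_loc) blast
lemma loc_mono2: "loc m (\<lambda>S. mono t a b c d e f m u g \<alpha> R S)"
  by (rule locI, rule mono_loc) blast

lemma loc_app: "loc m (app m (mono t a b c d e f m u g \<alpha>) \<phi>)"
proof (rule locI)
  fix S S' assume e: "S \<inter> {1..m} = S' \<inter> {1..m}"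
  show "app m (mono t a b c d e f m u g \<alpha>) \<phi> S = app m (mono t a b c d e f m u g \<alpha>) \<phi> S'"
    unfolding app_def by (rule sum.cong[OF refl]) (simp add: locD[OF loc_mono1 e])
qed
lemma loc_capp: "loc m (capp m (mono t a b c d e f m u g \<alpha>) \<phi>)"
proof (rule locI)
  fix S S' assume e: "S \<inter> {1..m} = S' \<inter> {1..m}"
  show "capp m (mono t a b c d e f m u g \<alpha>) \<phi> S = capp m (mono t a b c d e f m u g \<alpha>) \<phi> S'"
    unfolding capp_def by (rule sum.cong[OF refl]) (simp add: locD[OF loc_mono2 e])
qed

lemma app_opP: "app m (mono t a b c d e f m w g1 a1) (app m (mono t a b c d e f m v g2 a2) \<phi>)
   = (\<lambda>S'. \<Sum>S\<in>Pow {1..m}. opP t a b c d e f m w v g1 a1 g2 a2 S' S * \<phi> S)"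
  unfolding app_app opP_def ..
lemma capp_opP: "capp m (mono t a b c d e f m w g1 a1) (capp m (mono t a b c d e f m v g2 a2) \<phi>)
   = (\<lambda>S. \<Sum>R\<in>Pow {1..m}. \<phi> R * opP t a b c d e f m v w g2 a2 g1 a1 R S)"
  unfolding capp_capp opP_def ..

lemma comb_app:
  fixes \<phi> :: vec
  assumes "\<And>S' S. P1 S' S = c1 * P2 S' S + c2 * P3 S' S"
  shows "(\<lambda>S'. \<Sum>S\<in>A. P1 S' S * \<phi> S) = (\<lambda>S'. c1 * (\<Sum>S\<in>A. P2 S' S * \<phi> S) + c2 * (\<Sum>S\<in>A. P3 S' S * \<phi> S))"
  by (rule ext) (simp add: assms distrib_right sum.distrib sum_distrib_left mult.assoc)
lemma comb_capp:
  fixes \<phi> :: vec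
  assumes "\<And>S' S. P1 S' S = c1 * P2 S' S + c2 * P3 S' S"
  shows "(\<lambda>S. \<Sum>R\<in>A. \<phi> R * P1 R S) = (\<lambda>S. c1 * (\<Sum>R\<in>A. \<phi> R * P2 R S) + c2 * (\<Sum>R\<in>A. \<phi> R * P3 R S))"
  by (rule ext) (simp add: assms distrib_left sum.distrib sum_distrib_left mult.left_commute)

context
  fixes t a b c d e f :: complex
  assumes rel1: "c*d + a*f = 0" and rel2: "t*c*d + b*e = 0"
begin

abbreviation "P \<equiv> opP t a b c d e f"

lemma RTTc: "bsum (\<lambda>b1. bsum (\<lambda>b2. Rm t u v g1 g2 b1 b2 * P m u v b1 a1 b2 a2 S' S))
       = bsum (\<lambda>b1. bsum (\<lambda>b2. P m v u g2 b2 g1 b1 S' S * Rm t u v b1 b2 a1 a2))"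
  by (rule RTT[OF rel1 rel2])

lemma BBc: "(u - t*v) * P m u v False True False True S' S = (u - t*v) * P m v u False True False True S' S"
  using RTTc[of u v False False m True True S' S] by (simp add: bsum_def Rm_def ac_simps)
lemma CCc: "(u - t*v) * P m u v True False True False S' S = (u - t*v) * P m v u True False True False S' S"
  using RTTc[of u v True True m False False S' S] by (simp add: bsum_def Rm_def ac_simps)
lemma R1c: "(u - v) * P m u v True True False True S' S + (1-t)*v * P m u v False True True True S' S
    = (u - t*v) * P m v u False True True True S' S"
  using RTTc[of u v True False m True True S' S] by (simp add: bsum_def Rm_def ac_simps)
lemma R2c: "(u - v) * P m u v True False False False S' S + (1-t)*v * P m u v False False True False S' S
    = (u - t*v) * P m v u False False True False S' S"
  using RTTc[of u v True False m False False S' S] by (simp add: bsum_def Rm_def ac_simps)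
lemma R3c: "t*(u - v) * P m u v False True True True S' S + (1-t)*u * P m u v True True False True S' S
    = (u - t*v) * P m v u True True False True S' S"
  using RTTc[of u v False True m True True S' S] by (simp add: bsum_def Rm_def ac_simps)
lemma R4c: "t*(u - v) * P m u v False False True False S' S + (1-t)*u * P m u v True False False False S' S
    = (u - t*v) * P m v u True False False False S' S"
  using RTTc[of u v False True m False False S' S] by (simp add: bsum_def Rm_def ac_simps)

end


lemma app_cong: "(\<And>R. R \<in> Pow {1..m} \<Longrightarrow> \<phi> R = \<psi> R) \<Longrightarrow> app m X \<phi> = app m X \<psi>"
  unfolding app_def by (auto intro!: sum.cong)
lemma capp_cong: "(\<And>R. R \<in> Pow {1..m} \<Longrightarrow> \<phi> R = \<psi> R) \<Longrightarrow> capp m X \<phi> = capp m X \<psi>"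
  unfolding capp_def by (auto intro!: sum.cong)

definition prF :: "nat \<Rightarrow> vec \<Rightarrow> vec" where "prF m \<phi> = (\<lambda>R. \<phi> (R - {Suc m}))"
definition prT :: "nat \<Rightarrow> vec \<Rightarrow> vec" where "prT m \<phi> = (\<lambda>R. \<phi> (insert (Suc m) R))"

lemma app_split: "app (Suc m) (mono t a b c d e f (Suc m) w g \<alpha>) \<psi> S' =
  bsum (\<lambda>\<beta>. Lent t a b c d e f w g (Suc m \<in> S') \<beta> False * app m (mono t a b c d e f m w \<beta> \<alpha>) (prF m \<psi>) S'
           + Lent t a b c d e f w g (Suc m \<in> S') \<beta> True * app m (mono t a b c d e f m w \<beta> \<alpha>) (prT m \<psi>) S')"
proof -
  let ?L = "Lent t a b c d e f" and ?m = "mono t a b c d e f"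
  have A: "?m (Suc m) w g \<alpha> S' R * \<psi> R = bsum (\<lambda>\<beta>. ?L w g (Suc m \<in> S') \<beta> False * (?m m w \<beta> \<alpha> S' R * prF m \<psi> R))"
    if "R \<in> Pow {1..m}" for R
  proof -
    have "Suc m \<notin> R" "R - {Suc m} = R" using that by auto
    then show ?thesis unfolding mono_Suc_bsum prF_def by (simp add: bsum_def algebra_simps)
  qed
  have B: "?m (Suc m) w g \<alpha> S' (insert (Suc m) R) * \<psi> (insert (Suc m) R) = bsum (\<lambda>\<beta>. ?L w g (Suc m \<in> S') \<beta> True * (?m m w \<beta> \<alpha> S' R * prT m \<psi> R))" for R
    unfolding mono_Suc_bsum prT_def by (simp add: bsum_def algebra_simps mono_loc_ins2)
  have "app (Suc m) (?m (Suc m) w g \<alpha>) \<psi> S' = (\<Sum>R\<in>Pow {1..m}. bsum (\<lambda>\<beta>. ?L w g (Suc m \<in> S') \<beta> False * (?m m w \<beta> \<alpha> S' R * prF m \<psi> R)))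
     + (\<Sum>R\<in>Pow {1..m}. bsum (\<lambda>\<beta>. ?L w g (Suc m \<in> S') \<beta> True * (?m m w \<beta> \<alpha> S' R * prT m \<psi> R)))"
    unfolding app_def sum_Pow_Suc
    apply (intro arg_cong2[where f="(+)"] sum.cong refl)
     apply (rule A, assumption)
    apply (rule B)
    done
  also have "\<dots> = bsum (\<lambda>\<beta>. ?L w g (Suc m \<in> S') \<beta> False * app m (?m m w \<beta> \<alpha>) (prF m \<psi>) S'
           + ?L w g (Suc m \<in> S') \<beta> True * app m (?m m w \<beta> \<alpha>) (prT m \<psi>) S')"
    unfolding app_def by (simp add: bsum_def sum.distrib sum_distrib_left algebra_simps)
  finally show ?thesis .
qed

lemma capp_split: "capp (Suc m) (mono t a b c d e f (Suc m) w g \<alpha>) \<psi> S =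
  bsum (\<lambda>\<beta>. Lent t a b c d e f w g False \<beta> (Suc m \<in> S) * capp m (mono t a b c d e f m w \<beta> \<alpha>) (prF m \<psi>) S
           + Lent t a b c d e f w g True \<beta> (Suc m \<in> S) * capp m (mono t a b c d e f m w \<beta> \<alpha>) (prT m \<psi>) S)"
proof -
  let ?L = "Lent t a b c d e f" and ?m = "mono t a b c d e f"
  have A: "\<psi> R * ?m (Suc m) w g \<alpha> R S = bsum (\<lambda>\<beta>. ?L w g False \<beta> (Suc m \<in> S) * (prF m \<psi> R * ?m m w \<beta> \<alpha> R S))"
    if "R \<in> Pow {1..m}" for R
  proof -
    have "Suc m \<notin> R" "R - {Suc m} = R" using that by auto
    then show ?thesis unfolding mono_Suc_bsum prF_def by (simp add: bsum_def algebra_simps)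
  qed
  have B: "\<psi> (insert (Suc m) R) * ?m (Suc m) w g \<alpha> (insert (Suc m) R) S = bsum (\<lambda>\<beta>. ?L w g True \<beta> (Suc m \<in> S) * (prT m \<psi> R * ?m m w \<beta> \<alpha> R S))" for R
    unfolding mono_Suc_bsum prT_def by (simp add: bsum_def algebra_simps mono_loc_ins1)
  have "capp (Suc m) (?m (Suc m) w g \<alpha>) \<psi> S = (\<Sum>R\<in>Pow {1..m}. bsum (\<lambda>\<beta>. ?L w g False \<beta> (Suc m \<in> S) * (prF m \<psi> R * ?m m w \<beta> \<alpha> R S)))
     + (\<Sum>R\<in>Pow {1..m}. bsum (\<lambda>\<beta>. ?L w g True \<beta> (Suc m \<in> S) * (prT m \<psi> R * ?m m w \<beta> \<alpha> R S)))"
    unfolding capp_def sum_Pow_Suc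
    apply (intro arg_cong2[where f="(+)"] sum.cong refl)
     apply (rule A, assumption)
    apply (rule B)
    done
  also have "\<dots> = bsum (\<lambda>\<beta>. ?L w g False \<beta> (Suc m \<in> S) * capp m (?m m w \<beta> \<alpha>) (prF m \<psi>) S
           + ?L w g True \<beta> (Suc m \<in> S) * capp m (?m m w \<beta> \<alpha>) (prT m \<psi>) S)"
    unfolding capp_def by (simp add: bsum_def sum.distrib sum_distrib_left algebra_simps)
  finally show ?thesis .
qed

lemma prF_split1: "loc m G0 \<Longrightarrow> prF m (\<lambda>S. if Suc m \<in> S then G1 S else G0 S) = G0"
  unfolding prF_def by (rule ext) (auto intro: locD)
lemma prT_split1: "loc m G1 \<Longrightarrow> prT m (\<lambda>S. if Suc m \<in> S then G1 S else G0 S) = G1"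
  unfolding prT_def by (rule ext) (auto intro: locD)
lemma prT_split0: "loc m G0 \<Longrightarrow> prT m (\<lambda>S. if Suc m \<notin> S then G1 S else G0 S) = G0"
  unfolding prT_def by (rule ext) (auto intro: locD)
lemma prF_split0: "loc m G1 \<Longrightarrow> prF m (\<lambda>S. if Suc m \<notin> S then G1 S else G0 S) = G1"
  unfolding prF_def by (rule ext) (auto intro: locD)

definition om0 :: "nat \<Rightarrow> vec" where "om0 m = (\<lambda>S. if S \<inter> {1..m} = {} then 1 else 0)"
definition om1 :: "nat \<Rightarrow> vec" where "om1 m = (\<lambda>S. if {1..m} \<subseteq> S then 1 else 0)"

lemma ivl_Suc_ins: "{1..Suc m} = insert (Suc m) {1..m}" by auto
lemma om0_Suc: "om0 (Suc m) = (\<lambda>S. if Suc m \<in> S then 0 else om0 m S)"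
  unfolding om0_def ivl_Suc_ins by (rule ext) auto
lemma om1_Suc: "om1 (Suc m) = (\<lambda>S. if Suc m \<notin> S then 0 else om1 m S)"
  unfolding om1_def ivl_Suc_ins by (rule ext) auto
lemma loc_om0: "loc m (om0 m)" unfolding om0_def by (rule locI) auto
lemma loc_om1: "loc m (om1 m)" unfolding om1_def by (rule locI) auto

lemma sum_om0: "(\<Sum>R\<in>Pow {1..m}. F R * om0 m R) = F {}"
proof -
  have "(\<Sum>R\<in>Pow {1..m}. F R * om0 m R) = (\<Sum>R\<in>Pow {1..m}. if R = {} then F R else 0)"
    by (rule sum.cong) (auto simp: om0_def Int_absorb2)
  also have "\<dots> = F {}" by (simp add: sum.delta')
  finally show ?thesis .
qed
lemma sum_om1: "(\<Sum>R\<in>Pow {1..m}. F R * om1 m R) = F {1..m}"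
proof -
  have "(\<Sum>R\<in>Pow {1..m}. F R * om1 m R) = (\<Sum>R\<in>Pow {1..m}. if R = {1..m} then F R else 0)"
    by (rule sum.cong) (auto simp: om1_def)
  also have "\<dots> = F {1..m}" by (simp add: sum.delta')
  finally show ?thesis .
qed
lemma sum_om0': "(\<Sum>R\<in>Pow {1..m}. om0 m R * F R) = F {}"
  using sum_om0[where F=F and m=m] by (simp add: ac_simps)
lemma sum_om1': "(\<Sum>R\<in>Pow {1..m}. om1 m R * F R) = F {1..m}"
  using sum_om1[where F=F and m=m] by (simp add: ac_simps)

lemma monoE1: "mono t a b c d e f m w True True S' {} = (e*w+f)^m * om0 m S'"
  by (induction m) (auto simp: om0_Suc Lent_def, simp add: om0_def)
lemma monoE2: "mono t a b c d e f m w False False S' {1..m} = (a*t*w+b)^m * om1 m S'"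
proof (induction m)
  case 0 then show ?case by (simp add: om1_def)
next
  case (Suc m)
  have "mono t a b c d e f m w False False S' {1..Suc m} = mono t a b c d e f m w False False S' {1..m}"
    by (rule mono_loc) auto
  then show ?case using Suc by (auto simp: om1_Suc Lent_def)
qed
lemma monoE3: "mono t a b c d e f m w False False {} S = (a*w+b)^m * om0 m S"
  by (induction m) (auto simp: om0_Suc Lent_def, simp add: om0_def)
lemma monoE4: "mono t a b c d e f m w True True {1..m} S = (e*w+t*f)^m * om1 m S"
proof (induction m)
  case 0 then show ?case by (simp add: om1_def)
next
  case (Suc m)
  have "mono t a b c d e f m w True True {1..Suc m} S = mono t a b c d e f m w True True {1..m} S"
    by (rule mono_loc) auto
  then show ?case using Suc by (auto simp: om1_Suc Lent_def)
qed

lemma eig1: "app m (mono t a b c d e f m w True True) (om0 m) = (\<lambda>S. (e*w+f)^m * om0 m S)"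
  unfolding app_def sum_om0 monoE1 ..
lemma eig4: "app m (mono t a b c d e f m w False False) (om1 m) = (\<lambda>S. (a*t*w+b)^m * om1 m S)"
  unfolding app_def sum_om1 monoE2 ..
lemma eig2: "capp m (mono t a b c d e f m w False False) (om0 m) = (\<lambda>S. (a*w+b)^m * om0 m S)"
  unfolding capp_def sum_om0' monoE3 ..
lemma eig3: "capp m (mono t a b c d e f m w True True) (om1 m) = (\<lambda>S. (e*w+t*f)^m * om1 m S)"
  unfolding capp_def sum_om1' monoE4 ..



lemma img_flp:
  assumes sm: "strict_mono_on {1..Suc n} x" and im: "x ` {1..Suc n} \<subseteq> {1..Suc m}"
  shows "(Suc m \<in> x ` {1..Suc n}) = (x (Suc n) = Suc m)"
proof
  assume "Suc m \<in> x ` {1..Suc n}"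
  then obtain j where j: "j \<in> {1..Suc n}" "x j = Suc m" by auto
  show "x (Suc n) = Suc m"
  proof (cases "j = Suc n")
    case True then show ?thesis using j by simp
  next
    case False
    then have jl: "j < Suc n" using j by auto
    have sn: "Suc n \<in> {1..Suc n}" by simp
    have "x j < x (Suc n)" by (rule strict_mono_onD[OF sm j(1) sn jl])
    moreover have "x (Suc n) \<in> {1..Suc m}" using imageI[OF sn, of x] im by (rule subsetD[rotated])
    ultimately show ?thesis using j by auto
  qed
next
  assume "x (Suc n) = Suc m"
  moreover have "Suc n \<in> {1..Suc n}" by simp
  ultimately show "Suc m \<in> x ` {1..Suc n}" by (metis imageI)
qed

lemma img_r2: "x (Suc n) = Suc m \<Longrightarrow> x ` {1..Suc n} \<inter> {1..m} = x ` {1..n} \<inter> {1..m}"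
proof -
  assume "x (Suc n) = Suc m"
  moreover have "{1..Suc n} = insert (Suc n) {1..n}" by auto
  ultimately show ?thesis by auto
qed

lemma oplist_ket:
  assumes S0: "\<forall>R\<in>Pow {1..M}. om R = (if R = S0 then 1 else 0)"
  shows "\<forall>S'\<in>Pow {1..M}. oplist M (map (\<lambda>j. X (u j)) (rev [1..<n+1])) S' S0 = Yvf (\<lambda>w. app M (X w)) om u n S'"
proof (induction n)
  case 0 then show ?case using S0 by simp
next
  case (Suc n)
  show ?case
  proof
    fix S' assume "S' \<in> Pow {1..M}"
    have r: "rev [1..<Suc n + 1] = Suc n # rev [1..<n+1]" by simp
    have "oplist M (map (\<lambda>j. X (u j)) (rev [1..<Suc n+1])) S' S0 = (\<Sum>R\<in>Pow {1..M}. X (u (Suc n)) S' R * oplist M (map (\<lambda>j. X (u j)) (rev [1..<n+1])) R S0)"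
      unfolding r by (simp add: opmul_def)
    also have "\<dots> = (\<Sum>R\<in>Pow {1..M}. X (u (Suc n)) S' R * Yvf (\<lambda>w. app M (X w)) om u n R)"
      using Suc by (intro sum.cong) auto
    finally show "oplist M (map (\<lambda>j. X (u j)) (rev [1..<Suc n+1])) S' S0 = Yvf (\<lambda>w. app M (X w)) om u (Suc n) S'"
      by (simp add: app_def)
  qed
qed

lemma oplist_snoc:
  "S' \<in> Pow {1..M} \<Longrightarrow> S \<in> Pow {1..M} \<Longrightarrow> oplist M (Xs @ [Y]) S' S = (\<Sum>R\<in>Pow {1..M}. oplist M Xs S' R * Y R S)"
proof (induction Xs arbitrary: S')
  case Nil
  have d1: "(if P then 1 else 0) * (y::complex) = (if P then y else 0)" for P y by simp
  have d2: "(y::complex) * (if P then 1 else 0) = (if P then y else 0)" for P y by simp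
  have "oplist M [Y] S' S = Y S' S" using Nil by (simp add: opmul_def d2 sum.delta')
  moreover have "(\<Sum>R\<in>Pow {1..M}. oplist M [] S' R * Y R S) = Y S' S" using Nil by (simp add: d1 sum.delta)
  ultimately show ?case by simp
next
  case (Cons X Xs)
  have "oplist M ((X # Xs) @ [Y]) S' S = (\<Sum>R\<in>Pow {1..M}. X S' R * (\<Sum>R'\<in>Pow {1..M}. oplist M Xs R R' * Y R' S))"
    using Cons by (simp add: opmul_def)
  also have "\<dots> = (\<Sum>R'\<in>Pow {1..M}. (\<Sum>R\<in>Pow {1..M}. X S' R * oplist M Xs R R') * Y R' S)"
    by (simp add: sum_distrib_left sum_distrib_right mult.assoc) (rule sum.swap)
  also have "\<dots> = (\<Sum>R\<in>Pow {1..M}. oplist M (X # Xs) S' R * Y R S)" by (simp add: opmul_def)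
  finally show ?case .
qed

lemma oplist_bra:
  assumes S0: "\<forall>R\<in>Pow {1..M}. om R = (if R = S0 then 1 else 0)" and S0M: "S0 \<in> Pow {1..M}"
  shows "\<forall>S\<in>Pow {1..M}. oplist M (map (\<lambda>j. X (u j)) [1..<n+1]) S0 S = Yvf (\<lambda>w. capp M (X w)) om u n S"
proof (induction n)
  case 0 then show ?case using S0 by auto
next
  case (Suc n)
  show ?case
  proof
    fix S assume S: "S \<in> Pow {1..M}"
    have r: "[1..<Suc n + 1] = [1..<n+1] @ [Suc n]" by simp
    have "oplist M (map (\<lambda>j. X (u j)) [1..<Suc n+1]) S0 S = (\<Sum>R\<in>Pow {1..M}. oplist M (map (\<lambda>j. X (u j)) [1..<n+1]) S0 R * X (u (Suc n)) R S)"
      unfolding r by (simp add: oplist_snoc[OF S0M S])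
    also have "\<dots> = (\<Sum>R\<in>Pow {1..M}. Yvf (\<lambda>w. capp M (X w)) om u n R * X (u (Suc n)) R S)"
      using Suc by (intro sum.cong) auto
    finally show "oplist M (map (\<lambda>j. X (u j)) [1..<Suc n+1]) S0 S = Yvf (\<lambda>w. capp M (X w)) om u (Suc n) S"
      by (simp add: capp_def)
  qed
qed


lemma M1gen: fixes K x y :: complex assumes x: "x \<noteq> 0" and y: "y \<noteq> 0"
  shows "K/x * y^Suc m * (x/y)^Suc m = K * x^m"
proof -
  have p: "y^Suc m \<noteq> 0" using y by simp
  have "K/x * y^Suc m * (x/y)^Suc m = K/x * (y^Suc m * (x^Suc m / y^Suc m))"
    by (simp only: power_divide mult.assoc)
  also have "\<dots> = K/x * x^Suc m" using p by simp
  also have "\<dots> = K * x^m" using x by simp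
  finally show ?thesis .
qed

lemma hole_flp:
  assumes sm: "strict_mono_on {1..Suc n} x" and im: "x ` {1..Suc n} \<subseteq> {1..Suc m}"
  shows "(Suc m \<notin> {1..Suc m} - x ` {1..Suc n}) = (x (Suc n) = Suc m)"
proof -
  have "Suc m \<in> {1..Suc m}" by simp
  then have "(Suc m \<notin> {1..Suc m} - x ` {1..Suc n}) = (Suc m \<in> x ` {1..Suc n})" by blast
  then show ?thesis using img_flp[OF sm im] by simp
qed

lemma hole_r1: "({1..Suc m} - X) \<inter> {1..m} = ({1..m} - X) \<inter> {1..m}" by auto

lemma hole_r2: "x (Suc n) = Suc m \<Longrightarrow> ({1..Suc m} - x ` {1..Suc n}) \<inter> {1..m} = ({1..m} - x ` {1..n}) \<inter> {1..m}"
proof -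
  assume "x (Suc n) = Suc m"
  moreover have "{1..Suc n} = insert (Suc n) {1..n}" by auto
  ultimately show ?thesis by auto
qed

context
  fixes t a b c d e f :: complex
  assumes nzt: "t \<noteq> 0" and rel1: "c*d + a*f = 0" and rel2: "t*c*d + b*e = 0"
begin

definition okp :: "complex \<Rightarrow> complex \<Rightarrow> bool" where "okp v w \<longleftrightarrow> v \<noteq> w \<and> t*v \<noteq> w \<and> t*w \<noteq> v"
definition nzp :: "complex \<Rightarrow> bool" where
  "nzp w \<longleftrightarrow> a*w+b \<noteq> 0 \<and> e*w+f \<noteq> 0 \<and> a*t*w+b \<noteq> 0 \<and> e*w+t*f \<noteq> 0"

lemma okp_sym: "okp v w \<Longrightarrow> okp w v" by (auto simp: okp_def)

abbreviation "mo \<equiv> mono t a b c d e f"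
abbreviation "PP \<equiv> opP t a b c d e f"

definition "fc1 v w = (w - t*v)/(w - v)"
definition "gc1 x y = -(1-t)*y/(x - y)"

lemma mover1: "mover (\<lambda>w. app m (mo m w False True)) (\<lambda>w. app m (mo m w True True)) (om0 m) fc1 gc1 (\<lambda>w. (e*w+f)^m) okp"
proof (rule mover.intro)
  show "app m (mo m w False True) (\<lambda>S. \<Sum>k\<in>K. c k * \<phi> k S) = (\<lambda>S. \<Sum>k\<in>K. c k * app m (mo m w False True) (\<phi> k) S)"
    if "finite K" for K :: "nat set" and w c \<phi> using app_lin[OF that] .
  show "app m (mo m w2 False True) (\<lambda>S. c1 * \<phi>1 S + c2 * \<psi>1 S) = (\<lambda>S. c1 * app m (mo m w2 False True) \<phi>1 S + c2 * app m (mo m w2 False True) \<psi>1 S)"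
    for w2 c1 \<phi>1 c2 \<psi>1 by (rule app_lin2)
  show "app m (mo m v False True) (app m (mo m w False True) \<phi>2) = app m (mo m w False True) (app m (mo m v False True) \<phi>2)"
    if "okp v w" for v w \<phi>2
  proof -
    have "PP m v w False True False True S' S = PP m w v False True False True S' S" for S' S
      using BBc[OF rel1 rel2, of v w m S' S] that by (auto simp: okp_def)
    then show ?thesis unfolding app_opP by simp
  qed
  show "app m (mo m w True True) (app m (mo m v False True) \<phi>2) =
      (\<lambda>S. fc1 v w * app m (mo m v False True) (app m (mo m w True True) \<phi>2) S + gc1 w v * app m (mo m w False True) (app m (mo m v True True) \<phi>2) S)"
    if "okp v w" for v w \<phi>2
  proof -
    have "PP m w v True True False True S' S = fc1 v w * PP m v w False True True True S' S + gc1 w v * PP m w v False True True True S' S" for S' S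
    proof -
      have wv: "w - v \<noteq> 0" using that by (auto simp: okp_def)
      have "(w - v) * PP m w v True True False True S' S + (1-t)*v * PP m w v False True True True S' S
         = (w - t*v) * PP m v w False True True True S' S" by (rule R1c[OF rel1 rel2])
      then have eq2: "(w - v) * PP m w v True True False True S' S = (w - t*v) * PP m v w False True True True S' S - (1-t)*v * PP m w v False True True True S' S"
        by (simp add: algebra_simps)
      have c1: "(w - v) * (fc1 v w * PP m v w False True True True S' S + gc1 w v * PP m w v False True True True S' S)
          = (w - t*v) * PP m v w False True True True S' S - (1-t)*v * PP m w v False True True True S' S"
        unfolding fc1_def gc1_def using wv by (simp add: distrib_left) (simp add: algebra_simps)
      show ?thesis using c1 eq2 wv by (metis mult_left_cancel)
    qed
    then show ?thesis unfolding app_opP by (rule comb_app)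
  qed
  show "app m (mo m w True True) (om0 m) = (\<lambda>S. (e*w+f)^m * om0 m S)" for w by (rule eig1)
  show "fc1 v w * gc1 w z + gc1 w v * gc1 v z = gc1 w z * fc1 v z" if "okp v w" "okp w z" "okp v z" for v w z
  proof -
    have n: "w - v \<noteq> 0" "z - w \<noteq> 0" "z - v \<noteq> 0" "w - z \<noteq> 0" "v - z \<noteq> 0" "v - w \<noteq> 0" using that by (auto simp: okp_def)
    show ?thesis unfolding fc1_def gc1_def using n by (simp add: divide_simps) (simp add: algebra_simps)
  qed
  show "okp v w \<Longrightarrow> okp w v" for v w by (rule okp_sym)
qed


lemma M4_1: "okp v w \<Longrightarrow> (a*t*v+b) * ((1-t)*c*w) + (a*w+b) * ((1-t)*c*v) * gc1 v w = (1-t)*c*w * (a*v+b) * fc1 v w"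
proof -
  assume o: "okp v w"
  then have n: "w - v \<noteq> 0" "v - w \<noteq> 0" by (auto simp: okp_def)
  show ?thesis unfolding fc1_def gc1_def using n by (simp add: divide_simps) (simp add: algebra_simps)
qed

lemma wf1: "wfgen (\<lambda>m w. app m (mo m w False True)) (\<lambda>m w. app m (mo m w True True)) om0 fc1 gc1 (\<lambda>m w. (e*w+f)^m) okp nzp
   (\<lambda>w. a*w+b) (\<lambda>w. a*t*w+b) (\<lambda>w. (1-t)*c*w) (\<lambda>m S. Suc m \<in> S) prF prT (\<lambda>m N x. x ` {1..N})
   (\<lambda>w. (1-t)*c*w/(e*w+f)) (\<lambda>w. a*w+b) (\<lambda>w. (e*w+f)/(a*w+b)) (\<lambda>p q. (t*p - q)/(p - q)) (\<lambda>A B. (A - t*B)/(t*A - B))"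
proof (rule wfgen.intro)
  show "mover (\<lambda>w. app m (mo m w False True)) (\<lambda>w. app m (mo m w True True)) (om0 m) fc1 gc1 (\<lambda>w. (e*w+f)^m) okp" for m
    by (rule mover1)
  show "loc m (app m (mo m w False True) \<phi>)" for m w \<phi> by (rule loc_app)
  show "loc m (app m (mo m w True True) \<phi>)" for m w \<phi> by (rule loc_app)
  show "loc m (om0 m)" for m by (rule loc_om0)
  show "app m (mo m w True True) (\<lambda>S. c * \<phi> S) = (\<lambda>S. c * app m (mo m w True True) \<phi> S)" for m w c \<phi> by (rule app_smult)
  show "app (Suc m) (mo (Suc m) w False True) \<phi> = (\<lambda>S. if Suc m \<in> S then (a*t*w+b) * app m (mo m w False True) (prT m \<phi>) S + (1-t)*c*w * app m (mo m w True True) (prF m \<phi>) S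
       else (a*w+b) * app m (mo m w False True) (prF m \<phi>) S)" for m w \<phi>
    by (rule ext) (simp add: app_split bsum_def Lent_def)
  show "om0 (Suc m) = (\<lambda>S. if Suc m \<in> S then 0 else om0 m S)" for m by (rule om0_Suc)
  show "loc m G0 \<Longrightarrow> loc m G1 \<Longrightarrow> prF m (\<lambda>S. if Suc m \<in> S then G1 S else G0 S) = G0" for m G0 G1 by (rule prF_split1)
  show "loc m G0 \<Longrightarrow> loc m G1 \<Longrightarrow> prT m (\<lambda>S. if Suc m \<in> S then G1 S else G0 S) = G1" for m G0 G1 by (rule prT_split1)
  show "om0 m (x ` {1..0}) = 1" for m and x :: "nat \<Rightarrow> nat" by (simp add: om0_def)
  show "strict_mono_on {1..Suc n} x \<Longrightarrow> x ` {1..Suc n} \<subseteq> {1..Suc m} \<Longrightarrow> (Suc m \<in> x ` {1..Suc n}) = (x (Suc n) = Suc m)"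
    for n x m by (rule img_flp)
  show "x ` {1..N} \<subseteq> {1..m} \<Longrightarrow> x ` {1..N} \<inter> {1..m} = x ` {1..N} \<inter> {1..m}" for x N m by (rule refl)
  show "strict_mono_on {1..Suc n} x \<Longrightarrow> x ` {1..Suc n} \<subseteq> {1..Suc m} \<Longrightarrow> x (Suc n) = Suc m \<Longrightarrow>
      x ` {1..Suc n} \<inter> {1..m} = x ` {1..n} \<inter> {1..m}" for n x m by (rule img_r2)
  show "(1-t)*c*w/(e*w+f) * (a*w+b)^Suc m * ((e*w+f)/(a*w+b))^Suc m = (1-t)*c*w * (e*w+f)^m" if "nzp w" for w m
  proof -
    have n: "a*w+b \<noteq> 0" "e*w+f \<noteq> 0" using that by (auto simp: nzp_def)
    have p: "(a*w+b)^Suc m \<noteq> 0" using n by simp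
    have "(1-t)*c*w/(e*w+f) * (a*w+b)^Suc m * ((e*w+f)/(a*w+b))^Suc m
       = (1-t)*c*w/(e*w+f) * ((a*w+b)^Suc m * ((e*w+f)^Suc m / (a*w+b)^Suc m))"
      by (simp only: power_divide mult.assoc)
    also have "\<dots> = (1-t)*c*w/(e*w+f) * (e*w+f)^Suc m" using p by simp
    also have "\<dots> = (1-t)*c*w * (e*w+f)^m" using n by simp
    finally show ?thesis .
  qed
  show "a*w+b = a*w+b" for w ..
  show "fc1 v w = (t*v - w)/(v - w)" if "okp v w" for v w
  proof -
    have n: "w - v \<noteq> 0" "v - w \<noteq> 0" using that by (auto simp: okp_def)
    then show ?thesis unfolding fc1_def by (simp add: divide_simps) (simp add: algebra_simps)
  qed
  show "fc1 v w = (t*w - v)/(w - v) * ((w - t*v)/(t*w - v))" if "okp v w" for v w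
  proof -
    have n: "w - v \<noteq> 0" "t*w - v \<noteq> 0" using that by (auto simp: okp_def)
    then show ?thesis unfolding fc1_def by (simp add: divide_simps)
  qed
  show "okp v w \<Longrightarrow> nzp v \<Longrightarrow> nzp w \<Longrightarrow> (a*t*v+b) * ((1-t)*c*w) + (a*w+b) * ((1-t)*c*v) * gc1 v w = (1-t)*c*w * (a*v+b) * fc1 v w"
    for v w by (rule M4_1)
qed


lemma G_eq_BF: "Gfun t a b c d e f M N x u = BF (\<lambda>w. (1-t)*c*w/(e*w+f)) (\<lambda>w. a*w+b) (\<lambda>p q. (t*p - q)/(p - q)) (\<lambda>A B. (A - t*B)/(t*A - B)) (\<lambda>w. (e*w+f)/(a*w+b)) M N x u"
  unfolding Gfun_def BF_def by (simp add: times_divide_eq_left mult.commute mult.left_commute)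

theorem G_thm:
  assumes sm: "strict_mono_on {1..N} x" and im: "x ` {1..N} \<subseteq> {1..M}" and g: "wfgen.gen okp nzp N u"
  shows "oplist M (map (\<lambda>j. Bop t a b c d e f M (u j)) (rev [1..<N+1])) (x ` {1..N}) {} = Gfun t a b c d e f M N x u"
proof -
  have m: "Yvf (\<lambda>w. app M (mo M w False True)) (om0 M) u N (x ` {1..N}) = Gfun t a b c d e f M N x u"
    unfolding G_eq_BF by (rule wfgen.main[OF wf1 sm im g])
  have om: "\<forall>R\<in>Pow {1..M}. om0 M R = (if R = {} then 1 else 0)" by (auto simp: om0_def Int_absorb2)
  have "\<forall>S'\<in>Pow {1..M}. oplist M (map (\<lambda>j. mo M (u j) False True) (rev [1..<N+1])) S' {} = Yvf (\<lambda>w. app M (mo M w False True)) (om0 M) u N S'"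
    by (rule oplist_ket[OF om])
  then have "oplist M (map (\<lambda>j. mo M (u j) False True) (rev [1..<N+1])) (x ` {1..N}) {} = Yvf (\<lambda>w. app M (mo M w False True)) (om0 M) u N (x ` {1..N})"
    using im by auto
  then show ?thesis unfolding Bop_def m .
qed

definition "fc2 v w = (v - t*w)/(v - w)"
definition "gc2 x y = -(1-t)*x/(y - x)"

lemma mover2: "mover (\<lambda>w. capp m (mo m w True False)) (\<lambda>w. capp m (mo m w False False)) (om0 m) fc2 gc2 (\<lambda>w. (a*w+b)^m) okp"
proof (rule mover.intro)
  show "capp m (mo m w True False) (\<lambda>S. \<Sum>k\<in>K. c k * \<phi> k S) = (\<lambda>S. \<Sum>k\<in>K. c k * capp m (mo m w True False) (\<phi> k) S)"
    if "finite K" for K :: "nat set" and w c \<phi> using capp_lin[OF that] .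
  show "capp m (mo m w2 True False) (\<lambda>S. c1 * \<phi>1 S + c2 * \<psi>1 S) = (\<lambda>S. c1 * capp m (mo m w2 True False) \<phi>1 S + c2 * capp m (mo m w2 True False) \<psi>1 S)"
    for w2 c1 \<phi>1 c2 \<psi>1 by (rule capp_lin2)
  show "capp m (mo m v True False) (capp m (mo m w True False) \<phi>2) = capp m (mo m w True False) (capp m (mo m v True False) \<phi>2)"
    if "okp v w" for v w \<phi>2
  proof -
    have "PP m v w True False True False S' S = PP m w v True False True False S' S" for S' S
      using CCc[OF rel1 rel2, of v w m S' S] CCc[OF rel1 rel2, of w v m S' S] that by (auto simp: okp_def)
    then show ?thesis unfolding capp_opP by simp
  qed
  show "capp m (mo m w False False) (capp m (mo m v True False) \<phi>2) =
      (\<lambda>S. fc2 v w * capp m (mo m v True False) (capp m (mo m w False False) \<phi>2) S + gc2 w v * capp m (mo m w True False) (capp m (mo m v False False) \<phi>2) S)"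
    if "okp v w" for v w \<phi>2
  proof -
    have "PP m v w True False False False S' S = fc2 v w * PP m w v False False True False S' S + gc2 w v * PP m v w False False True False S' S" for S' S
    proof -
      have wv: "(v - w) \<noteq> 0" using that nzt by (auto simp: okp_def)
      have "(v - w) * PP m v w True False False False S' S + (1-t)*w * PP m v w False False True False S' S = (v - t*w) * PP m w v False False True False S' S" by (rule R2c[OF rel1 rel2])
      then have eq2: "(v - w) * PP m v w True False False False S' S = (v - t*w) * PP m w v False False True False S' S - (1-t)*w * PP m v w False False True False S' S"
        by (simp add: algebra_simps)
      have c1: "(v - w) * (fc2 v w * PP m w v False False True False S' S + gc2 w v * PP m v w False False True False S' S) = (v - t*w) * PP m w v False False True False S' S - (1-t)*w * PP m v w False False True False S' S"
        unfolding fc2_def gc2_def using wv by (simp add: distrib_left) (simp add: algebra_simps)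
      show ?thesis using c1 eq2 wv by (metis mult_left_cancel)
    qed
    then show ?thesis unfolding capp_opP by (rule comb_capp)
  qed
  show "capp m (mo m w False False) (om0 m) = (\<lambda>S. (a*w+b)^m * om0 m S)" for w by (rule eig2)
  show "fc2 v w * gc2 w z + gc2 w v * gc2 v z = gc2 w z * fc2 v z" if "okp v w" "okp w z" "okp v z" for v w z
  proof -
    have n: "w - v \<noteq> 0" "z - w \<noteq> 0" "z - v \<noteq> 0" "w - z \<noteq> 0" "v - z \<noteq> 0" "v - w \<noteq> 0" "t \<noteq> 0" using that nzt by (auto simp: okp_def)
    show ?thesis unfolding fc2_def gc2_def using n by (simp add: divide_simps) (simp add: algebra_simps)
  qed
  show "okp v w \<Longrightarrow> okp w v" for v w by (rule okp_sym)
qed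

definition "fc3 v w = (v - t*w)/(t*(v - w))"
definition "gc3 x y = -(1-t)*y/(t*(y - x))"

lemma mover3: "mover (\<lambda>w. capp m (mo m w False True)) (\<lambda>w. capp m (mo m w True True)) (om1 m) fc3 gc3 (\<lambda>w. (e*w+t*f)^m) okp"
proof (rule mover.intro)
  show "capp m (mo m w False True) (\<lambda>S. \<Sum>k\<in>K. c k * \<phi> k S) = (\<lambda>S. \<Sum>k\<in>K. c k * capp m (mo m w False True) (\<phi> k) S)"
    if "finite K" for K :: "nat set" and w c \<phi> using capp_lin[OF that] .
  show "capp m (mo m w2 False True) (\<lambda>S. c1 * \<phi>1 S + c2 * \<psi>1 S) = (\<lambda>S. c1 * capp m (mo m w2 False True) \<phi>1 S + c2 * capp m (mo m w2 False True) \<psi>1 S)"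
    for w2 c1 \<phi>1 c2 \<psi>1 by (rule capp_lin2)
  show "capp m (mo m v False True) (capp m (mo m w False True) \<phi>2) = capp m (mo m w False True) (capp m (mo m v False True) \<phi>2)"
    if "okp v w" for v w \<phi>2
  proof -
    have "PP m v w False True False True S' S = PP m w v False True False True S' S" for S' S
      using BBc[OF rel1 rel2, of v w m S' S] BBc[OF rel1 rel2, of w v m S' S] that by (auto simp: okp_def)
    then show ?thesis unfolding capp_opP by simp
  qed
  show "capp m (mo m w True True) (capp m (mo m v False True) \<phi>2) =
      (\<lambda>S. fc3 v w * capp m (mo m v False True) (capp m (mo m w True True) \<phi>2) S + gc3 w v * capp m (mo m w False True) (capp m (mo m v True True) \<phi>2) S)"
    if "okp v w" for v w \<phi>2
  proof -
    have "PP m v w False True True True S' S = fc3 v w * PP m w v True True False True S' S + gc3 w v * PP m v w True True False True S' S" for S' S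
    proof -
      have wv: "(t*(v - w)) \<noteq> 0" using that nzt by (auto simp: okp_def)
      have "t*(v - w) * PP m v w False True True True S' S + (1-t)*v * PP m v w True True False True S' S = (v - t*w) * PP m w v True True False True S' S" by (rule R3c[OF rel1 rel2])
      then have eq2: "(t*(v - w)) * PP m v w False True True True S' S = (v - t*w) * PP m w v True True False True S' S - (1-t)*v * PP m v w True True False True S' S"
        by (simp add: algebra_simps)
      have c1: "(t*(v - w)) * (fc3 v w * PP m w v True True False True S' S + gc3 w v * PP m v w True True False True S' S) = (v - t*w) * PP m w v True True False True S' S - (1-t)*v * PP m v w True True False True S' S"
        unfolding fc3_def gc3_def using wv by (simp add: distrib_left) (simp add: algebra_simps)
      show ?thesis using c1 eq2 wv by (metis mult_left_cancel)
    qed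
    then show ?thesis unfolding capp_opP by (rule comb_capp)
  qed
  show "capp m (mo m w True True) (om1 m) = (\<lambda>S. (e*w+t*f)^m * om1 m S)" for w by (rule eig3)
  show "fc3 v w * gc3 w z + gc3 w v * gc3 v z = gc3 w z * fc3 v z" if "okp v w" "okp w z" "okp v z" for v w z
  proof -
    have n: "w - v \<noteq> 0" "z - w \<noteq> 0" "z - v \<noteq> 0" "w - z \<noteq> 0" "v - z \<noteq> 0" "v - w \<noteq> 0" "t \<noteq> 0" using that nzt by (auto simp: okp_def)
    show ?thesis unfolding fc3_def gc3_def using n by (simp add: divide_simps) (simp add: algebra_simps)
  qed
  show "okp v w \<Longrightarrow> okp w v" for v w by (rule okp_sym)
qed

definition "fc4 v w = (w - t*v)/(t*(w - v))"
definition "gc4 x y = -(1-t)*x/(t*(x - y))"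

lemma mover4: "mover (\<lambda>w. app m (mo m w True False)) (\<lambda>w. app m (mo m w False False)) (om1 m) fc4 gc4 (\<lambda>w. (a*t*w+b)^m) okp"
proof (rule mover.intro)
  show "app m (mo m w True False) (\<lambda>S. \<Sum>k\<in>K. c k * \<phi> k S) = (\<lambda>S. \<Sum>k\<in>K. c k * app m (mo m w True False) (\<phi> k) S)"
    if "finite K" for K :: "nat set" and w c \<phi> using app_lin[OF that] .
  show "app m (mo m w2 True False) (\<lambda>S. c1 * \<phi>1 S + c2 * \<psi>1 S) = (\<lambda>S. c1 * app m (mo m w2 True False) \<phi>1 S + c2 * app m (mo m w2 True False) \<psi>1 S)"
    for w2 c1 \<phi>1 c2 \<psi>1 by (rule app_lin2)
  show "app m (mo m v True False) (app m (mo m w True False) \<phi>2) = app m (mo m w True False) (app m (mo m v True False) \<phi>2)"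
    if "okp v w" for v w \<phi>2
  proof -
    have "PP m v w True False True False S' S = PP m w v True False True False S' S" for S' S
      using CCc[OF rel1 rel2, of v w m S' S] CCc[OF rel1 rel2, of w v m S' S] that by (auto simp: okp_def)
    then show ?thesis unfolding app_opP by simp
  qed
  show "app m (mo m w False False) (app m (mo m v True False) \<phi>2) =
      (\<lambda>S. fc4 v w * app m (mo m v True False) (app m (mo m w False False) \<phi>2) S + gc4 w v * app m (mo m w True False) (app m (mo m v False False) \<phi>2) S)"
    if "okp v w" for v w \<phi>2
  proof -
    have "PP m w v False False True False S' S = fc4 v w * PP m v w True False False False S' S + gc4 w v * PP m w v True False False False S' S" for S' S
    proof -
      have wv: "(t*(w - v)) \<noteq> 0" using that nzt by (auto simp: okp_def)
      have "t*(w - v) * PP m w v False False True False S' S + (1-t)*w * PP m w v True False False False S' S = (w - t*v) * PP m v w True False False False S' S" by (rule R4c[OF rel1 rel2])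
      then have eq2: "(t*(w - v)) * PP m w v False False True False S' S = (w - t*v) * PP m v w True False False False S' S - (1-t)*w * PP m w v True False False False S' S"
        by (simp add: algebra_simps)
      have c1: "(t*(w - v)) * (fc4 v w * PP m v w True False False False S' S + gc4 w v * PP m w v True False False False S' S) = (w - t*v) * PP m v w True False False False S' S - (1-t)*w * PP m w v True False False False S' S"
        unfolding fc4_def gc4_def using wv by (simp add: distrib_left) (simp add: algebra_simps)
      show ?thesis using c1 eq2 wv by (metis mult_left_cancel)
    qed
    then show ?thesis unfolding app_opP by (rule comb_app)
  qed
  show "app m (mo m w False False) (om1 m) = (\<lambda>S. (a*t*w+b)^m * om1 m S)" for w by (rule eig4)
  show "fc4 v w * gc4 w z + gc4 w v * gc4 v z = gc4 w z * fc4 v z" if "okp v w" "okp w z" "okp v z" for v w z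
  proof -
    have n: "w - v \<noteq> 0" "z - w \<noteq> 0" "z - v \<noteq> 0" "w - z \<noteq> 0" "v - z \<noteq> 0" "v - w \<noteq> 0" "t \<noteq> 0" using that nzt by (auto simp: okp_def)
    show ?thesis unfolding fc4_def gc4_def using n by (simp add: divide_simps) (simp add: algebra_simps)
  qed
  show "okp v w \<Longrightarrow> okp w v" for v w by (rule okp_sym)
qed

lemma wf2: "wfgen (\<lambda>m w. capp m (mo m w True False)) (\<lambda>m w. capp m (mo m w False False)) om0 fc2 gc2 (\<lambda>m w. (a*w+b)^m) okp nzp
   (\<lambda>w. e*w+f) (\<lambda>w. e*w+t*f) (\<lambda>w. (1-t)*d) (\<lambda>m S. Suc m \<in> S) prF prT (\<lambda>m N x. x ` {1..N})
   (\<lambda>w. (1-t)*d/(a*w+b)) (\<lambda>w. e*w+f) (\<lambda>w. (a*w+b)/(e*w+f)) (\<lambda>p q. (p - t*q)/(p - q)) (\<lambda>A B. (t*A - B)/(A - t*B))"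
proof (rule wfgen.intro)
  show "mover (\<lambda>w. capp m (mo m w True False)) (\<lambda>w. capp m (mo m w False False)) (om0 m) fc2 gc2 (\<lambda>w. (a*w+b)^m) okp" for m
    by (rule mover2)
  show "loc m (capp m (mo m w True False) \<phi>)" for m w \<phi> by (rule loc_capp)
  show "loc m (capp m (mo m w False False) \<phi>)" for m w \<phi> by (rule loc_capp)
  show "loc m (om0 m)" for m by (rule loc_om0)
  show "capp m (mo m w False False) (\<lambda>S. c * \<phi> S) = (\<lambda>S. c * capp m (mo m w False False) \<phi> S)" for m w c \<phi> by (rule capp_smult)
  show "capp (Suc m) (mo (Suc m) w True False) \<phi> = (\<lambda>S. if Suc m \<in> S then (e*w+t*f) * capp m (mo m w True False) (prT m \<phi>) S + (1-t)*d * capp m (mo m w False False) (prF m \<phi>) S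
       else (e*w+f) * capp m (mo m w True False) (prF m \<phi>) S)" for m w \<phi>
    by (rule ext) (simp add: capp_split bsum_def Lent_def)
  show "om0 (Suc m) = (\<lambda>S. if Suc m \<in> S then 0 else om0 m S)" for m by (rule om0_Suc)
  show "loc m G0 \<Longrightarrow> loc m G1 \<Longrightarrow> prF m (\<lambda>S. if Suc m \<in> S then G1 S else G0 S) = G0" for m G0 G1 by (rule prF_split1)
  show "loc m G0 \<Longrightarrow> loc m G1 \<Longrightarrow> prT m (\<lambda>S. if Suc m \<in> S then G1 S else G0 S) = G1" for m G0 G1 by (rule prT_split1)
  show "om0 m (x ` {1..0}) = 1" for m and x :: "nat \<Rightarrow> nat" by (simp add: om0_def)
  show "strict_mono_on {1..Suc n} x \<Longrightarrow> x ` {1..Suc n} \<subseteq> {1..Suc m} \<Longrightarrow> (Suc m \<in> x ` {1..Suc n}) = (x (Suc n) = Suc m)"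
    for n x m by (rule img_flp)
  show "x ` {1..N} \<subseteq> {1..m} \<Longrightarrow> x ` {1..N} \<inter> {1..m} = x ` {1..N} \<inter> {1..m}" for x N m by (rule refl)
  show "strict_mono_on {1..Suc n} x \<Longrightarrow> x ` {1..Suc n} \<subseteq> {1..Suc m} \<Longrightarrow> x (Suc n) = Suc m \<Longrightarrow>
      x ` {1..Suc n} \<inter> {1..m} = x ` {1..n} \<inter> {1..m}" for n x m by (rule img_r2)
  show "(1-t)*d/(a*w+b) * (e*w+f)^Suc m * ((a*w+b)/(e*w+f))^Suc m = (1-t)*d * (a*w+b)^m" if "nzp w" for w m
    using that by (intro M1gen) (auto simp: nzp_def)
  show "e*w+f = e*w+f" for w ..
  show "fc2 v w = (v - t*w)/(v - w)" if "okp v w" for v w unfolding fc2_def ..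
  show "fc2 v w = (w - t*v)/(w - v) * ((t*w - v)/(w - t*v))" if "okp v w" for v w
  proof -
    have n: "w - v \<noteq> 0" "v - w \<noteq> 0" "w - t*v \<noteq> 0" using that by (auto simp: okp_def)
    then show ?thesis unfolding fc2_def by (simp add: divide_simps) (simp add: algebra_simps)
  qed
  show "(e*v+t*f) * ((1-t)*d) + (e*w+f) * ((1-t)*d) * gc2 v w = (1-t)*d * (e*v+f) * fc2 v w" if "okp v w" "nzp v" "nzp w" for v w
  proof -
    have n: "w - v \<noteq> 0" "v - w \<noteq> 0" using that by (auto simp: okp_def)
    then show ?thesis unfolding fc2_def gc2_def by (simp add: divide_simps) (simp add: algebra_simps)
  qed
qed

lemma wf3: "wfgen (\<lambda>m w. capp m (mo m w False True)) (\<lambda>m w. capp m (mo m w True True)) om1 fc3 gc3 (\<lambda>m w. (e*w+t*f)^m) okp nzp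
   (\<lambda>w. a*t*w+b) (\<lambda>w. a*w+b) (\<lambda>w. (1-t)*c*w) (\<lambda>m S. Suc m \<notin> S) prT prF (\<lambda>m N x. {1..m} - x ` {1..N})
   (\<lambda>w. (1-t)*c*w/(e*w+t*f)) (\<lambda>w. a*t*w+b) (\<lambda>w. (e*w+t*f)/(a*t*w+b)) (\<lambda>p q. (p - t*q)/(t*(p - q))) (\<lambda>A B. (t*A - B)/(A - t*B))"
proof (rule wfgen.intro)
  show "mover (\<lambda>w. capp m (mo m w False True)) (\<lambda>w. capp m (mo m w True True)) (om1 m) fc3 gc3 (\<lambda>w. (e*w+t*f)^m) okp" for m
    by (rule mover3)
  show "loc m (capp m (mo m w False True) \<phi>)" for m w \<phi> by (rule loc_capp)
  show "loc m (capp m (mo m w True True) \<phi>)" for m w \<phi> by (rule loc_capp)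
  show "loc m (om1 m)" for m by (rule loc_om1)
  show "capp m (mo m w True True) (\<lambda>S. c * \<phi> S) = (\<lambda>S. c * capp m (mo m w True True) \<phi> S)" for m w c \<phi> by (rule capp_smult)
  show "capp (Suc m) (mo (Suc m) w False True) \<phi> = (\<lambda>S. if Suc m \<notin> S then (a*w+b) * capp m (mo m w False True) (prF m \<phi>) S + (1-t)*c*w * capp m (mo m w True True) (prT m \<phi>) S
       else (a*t*w+b) * capp m (mo m w False True) (prT m \<phi>) S)" for m w \<phi>
    by (rule ext) (simp add: capp_split bsum_def Lent_def)
  show "om1 (Suc m) = (\<lambda>S. if Suc m \<notin> S then 0 else om1 m S)" for m by (rule om1_Suc)
  show "loc m G0 \<Longrightarrow> loc m G1 \<Longrightarrow> prT m (\<lambda>S. if Suc m \<notin> S then G1 S else G0 S) = G0" for m G0 G1 by (rule prT_split0)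
  show "loc m G0 \<Longrightarrow> loc m G1 \<Longrightarrow> prF m (\<lambda>S. if Suc m \<notin> S then G1 S else G0 S) = G1" for m G0 G1 by (rule prF_split0)
  show "om1 m ({1..m} - x ` {1..0}) = 1" for m and x :: "nat \<Rightarrow> nat" by (simp add: om1_def)
  show "strict_mono_on {1..Suc n} x \<Longrightarrow> x ` {1..Suc n} \<subseteq> {1..Suc m} \<Longrightarrow> (Suc m \<notin> {1..Suc m} - x ` {1..Suc n}) = (x (Suc n) = Suc m)"
    for n x m by (rule hole_flp)
  show "x ` {1..N} \<subseteq> {1..m} \<Longrightarrow> ({1..Suc m} - x ` {1..N}) \<inter> {1..m} = ({1..m} - x ` {1..N}) \<inter> {1..m}" for x N m by (rule hole_r1)
  show "strict_mono_on {1..Suc n} x \<Longrightarrow> x ` {1..Suc n} \<subseteq> {1..Suc m} \<Longrightarrow> x (Suc n) = Suc m \<Longrightarrow>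
      ({1..Suc m} - x ` {1..Suc n}) \<inter> {1..m} = ({1..m} - x ` {1..n}) \<inter> {1..m}" for n x m by (rule hole_r2)
  show "(1-t)*c*w/(e*w+t*f) * (a*t*w+b)^Suc m * ((e*w+t*f)/(a*t*w+b))^Suc m = (1-t)*c*w * (e*w+t*f)^m" if "nzp w" for w m
    using that by (intro M1gen) (auto simp: nzp_def)
  show "a*t*w+b = a*t*w+b" for w ..
  show "fc3 v w = (v - t*w)/(t*(v - w))" if "okp v w" for v w unfolding fc3_def ..
  show "fc3 v w = (w - t*v)/(t*(w - v)) * ((t*w - v)/(w - t*v))" if "okp v w" for v w
  proof -
    have n: "w - v \<noteq> 0" "v - w \<noteq> 0" "w - t*v \<noteq> 0" "t \<noteq> 0" using that nzt by (auto simp: okp_def)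
    then show ?thesis unfolding fc3_def by (simp add: divide_simps) (simp add: algebra_simps)
  qed
  show "(a*v+b) * ((1-t)*c*w) + (a*t*w+b) * ((1-t)*c*v) * gc3 v w = (1-t)*c*w * (a*t*v+b) * fc3 v w" if "okp v w" "nzp v" "nzp w" for v w
  proof -
    have n: "w - v \<noteq> 0" "v - w \<noteq> 0" "t \<noteq> 0" using that nzt by (auto simp: okp_def)
    then show ?thesis unfolding fc3_def gc3_def by (simp add: divide_simps) (simp add: algebra_simps)
  qed
qed

lemma wf4: "wfgen (\<lambda>m w. app m (mo m w True False)) (\<lambda>m w. app m (mo m w False False)) om1 fc4 gc4 (\<lambda>m w. (a*t*w+b)^m) okp nzp
   (\<lambda>w. e*w+t*f) (\<lambda>w. e*w+f) (\<lambda>w. (1-t)*d) (\<lambda>m S. Suc m \<notin> S) prT prF (\<lambda>m N x. {1..m} - x ` {1..N})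
   (\<lambda>w. (1-t)*d/(a*t*w+b)) (\<lambda>w. e*w+t*f) (\<lambda>w. (a*t*w+b)/(e*w+t*f)) (\<lambda>p q. (t*p - q)/(t*(p - q))) (\<lambda>A B. (A - t*B)/(t*A - B))"
proof (rule wfgen.intro)
  show "mover (\<lambda>w. app m (mo m w True False)) (\<lambda>w. app m (mo m w False False)) (om1 m) fc4 gc4 (\<lambda>w. (a*t*w+b)^m) okp" for m
    by (rule mover4)
  show "loc m (app m (mo m w True False) \<phi>)" for m w \<phi> by (rule loc_app)
  show "loc m (app m (mo m w False False) \<phi>)" for m w \<phi> by (rule loc_app)
  show "loc m (om1 m)" for m by (rule loc_om1)
  show "app m (mo m w False False) (\<lambda>S. c * \<phi> S) = (\<lambda>S. c * app m (mo m w False False) \<phi> S)" for m w c \<phi> by (rule app_smult)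
  show "app (Suc m) (mo (Suc m) w True False) \<phi> = (\<lambda>S. if Suc m \<notin> S then (e*w+f) * app m (mo m w True False) (prF m \<phi>) S + (1-t)*d * app m (mo m w False False) (prT m \<phi>) S
       else (e*w+t*f) * app m (mo m w True False) (prT m \<phi>) S)" for m w \<phi>
    by (rule ext) (simp add: app_split bsum_def Lent_def)
  show "om1 (Suc m) = (\<lambda>S. if Suc m \<notin> S then 0 else om1 m S)" for m by (rule om1_Suc)
  show "loc m G0 \<Longrightarrow> loc m G1 \<Longrightarrow> prT m (\<lambda>S. if Suc m \<notin> S then G1 S else G0 S) = G0" for m G0 G1 by (rule prT_split0)
  show "loc m G0 \<Longrightarrow> loc m G1 \<Longrightarrow> prF m (\<lambda>S. if Suc m \<notin> S then G1 S else G0 S) = G1" for m G0 G1 by (rule prF_split0)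
  show "om1 m ({1..m} - x ` {1..0}) = 1" for m and x :: "nat \<Rightarrow> nat" by (simp add: om1_def)
  show "strict_mono_on {1..Suc n} x \<Longrightarrow> x ` {1..Suc n} \<subseteq> {1..Suc m} \<Longrightarrow> (Suc m \<notin> {1..Suc m} - x ` {1..Suc n}) = (x (Suc n) = Suc m)"
    for n x m by (rule hole_flp)
  show "x ` {1..N} \<subseteq> {1..m} \<Longrightarrow> ({1..Suc m} - x ` {1..N}) \<inter> {1..m} = ({1..m} - x ` {1..N}) \<inter> {1..m}" for x N m by (rule hole_r1)
  show "strict_mono_on {1..Suc n} x \<Longrightarrow> x ` {1..Suc n} \<subseteq> {1..Suc m} \<Longrightarrow> x (Suc n) = Suc m \<Longrightarrow>
      ({1..Suc m} - x ` {1..Suc n}) \<inter> {1..m} = ({1..m} - x ` {1..n}) \<inter> {1..m}" for n x m by (rule hole_r2)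
  show "(1-t)*d/(a*t*w+b) * (e*w+t*f)^Suc m * ((a*t*w+b)/(e*w+t*f))^Suc m = (1-t)*d * (a*t*w+b)^m" if "nzp w" for w m
    using that by (intro M1gen) (auto simp: nzp_def)
  show "e*w+t*f = e*w+t*f" for w ..
  show "fc4 v w = (t*v - w)/(t*(v - w))" if "okp v w" for v w
  proof -
    have n: "w - v \<noteq> 0" "v - w \<noteq> 0" "t \<noteq> 0" using that nzt by (auto simp: okp_def)
    then show ?thesis unfolding fc4_def by (simp add: divide_simps) (simp add: algebra_simps)
  qed
  show "fc4 v w = (t*w - v)/(t*(w - v)) * ((w - t*v)/(t*w - v))" if "okp v w" for v w
  proof -
    have n: "w - v \<noteq> 0" "v - w \<noteq> 0" "t*w - v \<noteq> 0" "t \<noteq> 0" using that nzt by (auto simp: okp_def)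
    then show ?thesis unfolding fc4_def by (simp add: divide_simps)
  qed
  show "(e*v+f) * ((1-t)*d) + (e*w+t*f) * ((1-t)*d) * gc4 v w = (1-t)*d * (e*v+t*f) * fc4 v w" if "okp v w" "nzp v" "nzp w" for v w
  proof -
    have n: "w - v \<noteq> 0" "v - w \<noteq> 0" "t \<noteq> 0" using that nzt by (auto simp: okp_def)
    then show ?thesis unfolding fc4_def gc4_def by (simp add: divide_simps) (simp add: algebra_simps)
  qed
qed

lemma Gbar_eq_BF: "Gbar t a b c d e f M N x u = BF (\<lambda>w. (1-t)*d/(a*w+b)) (\<lambda>w. e*w+f) (\<lambda>p q. (p - t*q)/(p - q)) (\<lambda>A B. (t*A - B)/(A - t*B)) (\<lambda>w. (a*w+b)/(e*w+f)) M N x u"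
  unfolding Gbar_def BF_def by (simp add: times_divide_eq_left mult.commute mult.left_commute)
lemma Hfun_eq_BF: "Hfun t a b c d e f M N x u = BF (\<lambda>w. (1-t)*c*w/(e*w+t*f)) (\<lambda>w. a*t*w+b) (\<lambda>p q. (p - t*q)/(t*(p - q))) (\<lambda>A B. (t*A - B)/(A - t*B)) (\<lambda>w. (e*w+t*f)/(a*t*w+b)) M N x u"
  unfolding Hfun_def BF_def by (simp add: times_divide_eq_left mult.commute mult.left_commute)
lemma Hbar_eq_BF: "Hbar t a b c d e f M N x u = BF (\<lambda>w. (1-t)*d/(a*t*w+b)) (\<lambda>w. e*w+t*f) (\<lambda>p q. (t*p - q)/(t*(p - q))) (\<lambda>A B. (A - t*B)/(t*A - B)) (\<lambda>w. (a*t*w+b)/(e*w+t*f)) M N x u"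
  unfolding Hbar_def BF_def by (simp add: times_divide_eq_left mult.commute mult.left_commute)

theorem Gbar_thm:
  assumes sm: "strict_mono_on {1..N} x" and im: "x ` {1..N} \<subseteq> {1..M}" and g: "wfgen.gen okp nzp N u"
  shows "oplist M (map (\<lambda>j. Cop t a b c d e f M (u j)) [1..<N+1]) {} (x ` {1..N}) = Gbar t a b c d e f M N x u"
proof -
  have m: "Yvf (\<lambda>w. capp M (mo M w True False)) (om0 M) u N (x ` {1..N}) = Gbar t a b c d e f M N x u"
    unfolding Gbar_eq_BF by (rule wfgen.main[OF wf2 sm im g])
  have om: "\<forall>R\<in>Pow {1..M}. om0 M R = (if R = {} then 1 else 0)" by (auto simp: om0_def Int_absorb2)
  have "\<forall>S\<in>Pow {1..M}. oplist M (map (\<lambda>j. mo M (u j) True False) [1..<N+1]) {} S = Yvf (\<lambda>w. capp M (mo M w True False)) (om0 M) u N S"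
    by (rule oplist_bra[OF om]) simp
  then have "oplist M (map (\<lambda>j. mo M (u j) True False) [1..<N+1]) {} (x ` {1..N}) = Yvf (\<lambda>w. capp M (mo M w True False)) (om0 M) u N (x ` {1..N})"
    using im by auto
  then show ?thesis unfolding Cop_def m .
qed

theorem H_thm:
  assumes sm: "strict_mono_on {1..N} x" and im: "x ` {1..N} \<subseteq> {1..M}" and g: "wfgen.gen okp nzp N u"
  shows "oplist M (map (\<lambda>j. Bop t a b c d e f M (u j)) [1..<N+1]) {1..M} ({1..M} - x ` {1..N}) = Hfun t a b c d e f M N x u"
proof -
  have m: "Yvf (\<lambda>w. capp M (mo M w False True)) (om1 M) u N ({1..M} - x ` {1..N}) = Hfun t a b c d e f M N x u"
    unfolding Hfun_eq_BF by (rule wfgen.main[OF wf3 sm im g])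
  have om: "\<forall>R\<in>Pow {1..M}. om1 M R = (if R = {1..M} then 1 else 0)" by (auto simp: om1_def)
  have "\<forall>S\<in>Pow {1..M}. oplist M (map (\<lambda>j. mo M (u j) False True) [1..<N+1]) {1..M} S = Yvf (\<lambda>w. capp M (mo M w False True)) (om1 M) u N S"
    by (rule oplist_bra[OF om]) simp
  then have "oplist M (map (\<lambda>j. mo M (u j) False True) [1..<N+1]) {1..M} ({1..M} - x ` {1..N}) = Yvf (\<lambda>w. capp M (mo M w False True)) (om1 M) u N ({1..M} - x ` {1..N})"
    by auto
  then show ?thesis unfolding Bop_def m .
qed

theorem Hbar_thm:
  assumes sm: "strict_mono_on {1..N} x" and im: "x ` {1..N} \<subseteq> {1..M}" and g: "wfgen.gen okp nzp N u"
  shows "oplist M (map (\<lambda>j. Cop t a b c d e f M (u j)) (rev [1..<N+1])) ({1..M} - x ` {1..N}) {1..M} = Hbar t a b c d e f M N x u"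
proof -
  have m: "Yvf (\<lambda>w. app M (mo M w True False)) (om1 M) u N ({1..M} - x ` {1..N}) = Hbar t a b c d e f M N x u"
    unfolding Hbar_eq_BF by (rule wfgen.main[OF wf4 sm im g])
  have om: "\<forall>R\<in>Pow {1..M}. om1 M R = (if R = {1..M} then 1 else 0)" by (auto simp: om1_def)
  have "\<forall>S'\<in>Pow {1..M}. oplist M (map (\<lambda>j. mo M (u j) True False) (rev [1..<N+1])) S' {1..M} = Yvf (\<lambda>w. app M (mo M w True False)) (om1 M) u N S'"
    by (rule oplist_ket[OF om])
  then have "oplist M (map (\<lambda>j. mo M (u j) True False) (rev [1..<N+1])) ({1..M} - x ` {1..N}) {1..M} = Yvf (\<lambda>w. app M (mo M w True False)) (om1 M) u N ({1..M} - x ` {1..N})"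
    by auto
  then show ?thesis unfolding Cop_def m .
qed

lemma gen_from:
  assumes inj: "inj_on u {1..N}"
    and gt: "\<And>j k. j \<in> {1..N} \<Longrightarrow> k \<in> {1..N} \<Longrightarrow> j \<noteq> k \<Longrightarrow> t * u j - u k \<noteq> 0"
    and gl: "\<And>j. j \<in> {1..N} \<Longrightarrow> a * u j + b \<noteq> 0 \<and> e * u j + f \<noteq> 0 \<and> a * t * u j + b \<noteq> 0 \<and> e * u j + t * f \<noteq> 0"
  shows "wfgen.gen okp nzp N u"
proof -
  have A: "okp (u i) (u j)" if i: "i \<in> {1..N}" and j: "j \<in> {1..N}" and ij: "i \<noteq> j" for i j
  proof -
    have "u i \<noteq> u j" using inj i j ij by (auto dest: inj_onD)
    moreover have "t * u i \<noteq> u j" using gt[OF i j ij] by simp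
    moreover have "t * u j \<noteq> u i" using gt[OF j i] ij by simp
    ultimately show ?thesis by (simp add: okp_def)
  qed
  have B: "nzp (u i)" if "i \<in> {1..N}" for i using gl[OF that] by (simp add: nzp_def)
  show ?thesis unfolding wfgen.gen_def[OF wf1] using A B by blast
qed
end

theorem theorem1:
  fixes t a b c d e f :: complex and M N :: nat
    and x xb :: "nat \<Rightarrow> nat" and u :: "nat \<Rightarrow> complex"
  assumes nz: "t \<noteq> 0" "a \<noteq> 0" "b \<noteq> 0" "c \<noteq> 0" "d \<noteq> 0" "e \<noteq> 0" "f \<noteq> 0"
    and t1: "t \<noteq> 1"
    and rel1: "c*d + a*f = 0" and rel2: "t*c*d + b*e = 0"
    and MN: "1 \<le> M" "1 \<le> N" "N \<le> M"
    and x: "strict_mono_on {1..N} x" "x ` {1..N} \<subseteq> {1..M}"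
    and xb: "strict_mono_on {1..N} xb" "xb ` {1..N} \<subseteq> {1..M}"
    \<comment> \<open>generic spectral parameters: all denominators occurring are nonzero\<close>
    and gen_inj: "inj_on u {1..N}"
    and gen_t: "\<And>j k. j \<in> {1..N} \<Longrightarrow> k \<in> {1..N} \<Longrightarrow> j \<noteq> k \<Longrightarrow> t * u j - u k \<noteq> 0"
    and gen_lin: "\<And>j. j \<in> {1..N} \<Longrightarrow>
        a * u j + b \<noteq> 0 \<and> e * u j + f \<noteq> 0 \<and> a * t * u j + b \<noteq> 0 \<and> e * u j + t * f \<noteq> 0"
  shows
   "(oplist M (map (\<lambda>j. Bop t a b c d e f M (u j)) (rev [1..<N+1])) (x ` {1..N}) {}
      = Gfun t a b c d e f M N x u) \<and>
    (oplist M (map (\<lambda>j. Cop t a b c d e f M (u j)) [1..<N+1]) {} (x ` {1..N})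
      = Gbar t a b c d e f M N x u) \<and>
    (oplist M (map (\<lambda>j. Bop t a b c d e f M (u j)) [1..<N+1]) {1..M} ({1..M} - xb ` {1..N})
      = Hfun t a b c d e f M N xb u) \<and>
    (oplist M (map (\<lambda>j. Cop t a b c d e f M (u j)) (rev [1..<N+1])) ({1..M} - xb ` {1..N}) {1..M}
      = Hbar t a b c d e f M N xb u)"
proof -
  have g: "wfgen.gen (okp t) (nzp t a b e f) N u" by (rule gen_from[OF nz(1) rel1 rel2 gen_inj gen_t gen_lin])
  show ?thesis
    using G_thm[OF nz(1) rel1 rel2 x g] Gbar_thm[OF nz(1) rel1 rel2 x g]
      H_thm[OF nz(1) rel1 rel2 xb g] Hbar_thm[OF nz(1) rel1 rel2 xb g] by blast
qed



end
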